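(* Let $\widetilde{\eta}\in\mathbf{R}$ with $|\widetilde\eta|$ large, let $\lambda>0$, and define $$\mathfrak{g}(a,\tau,\widetilde{\eta},\lambda):=-\lambda a+\frac{2\widetilde{\eta}^2(1-\tau)}{\tau}+\frac{2-\tau}{2a^2\tau^2}.$$ Let $$\Omega:=\Bigl[0,\tfrac{1}{3\sqrt3}-\tfrac{\mathrm{i}}{3}\Bigr]\cup\Bigl(\tfrac{1}{3\sqrt3}-\tfrac{\mathrm{i}}{3},1-\tfrac{1}{3\sqrt3}-\tfrac{\mathrm{i}}{3}\Bigr]\cup\Bigl(1-\tfrac{1}{3\sqrt3}-\tfrac{\mathrm{i}}{3},1\Bigr]$$ (traversed from $0$ to $1$) and $$\Lambda:=[0,z_0]\cup\bigl(z_0,z_0+e^{3\mathrm{i}\pi/5}\infty\bigr),\qquad z_0:=\frac{\sin(4\pi/15)}{\sin(17\pi/30)}e^{\mathrm{i}\pi/6},$$ and, for a fixed large constant $C>0$, set $$\widetilde\Omega:=\{\tau\in\Omega:|\tau|\le C|\widetilde{\eta}|^{-1/2}\},\qquad \widetilde\Lambda:=\{a\in\Lambda:|a|\le|\widetilde{\eta}|^{-1/2}\}.$$ Then for any large constant $C_0>0$, any fixed $\gamma\in\mathbf{R}$ and any $C_0^{-1}\le\lambda\le C_0$, $$\int_{\Omega\setminus\widetilde\Omega}\tau^{-\gamma}e^{\mathfrak{g}(a,1,\widetilde{\eta},\lambda)-\mathfrak{g}(a,\tau,\widetilde{\eta},\lambda)}\,\mathrm{d}\tau=\frac{1}{2\widetilde{\eta}^2}+\mathcal{O}\bigl(|\widetilde{\eta}|^{-3}\bigr)$$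 uniformly in $a\in\Lambda\setminus\widetilde\Lambda$, where the implicit constant in $\mathcal{O}(\cdot)$ depends on $C_0$.
   Context: $\tau^{-\gamma}$ denotes the principal branch. The function $\mathfrak{g}$ is the phase function of the limiting one-point function of the shifted real Ginibre ensemble at the edge ($\widetilde\delta=0$); note that $\mathfrak{g}(a,1,\widetilde\eta,\lambda)-\mathfrak{g}(a,\tau,\widetilde\eta,\lambda)=-\frac{2\widetilde\eta^2(1-\tau)}{\tau}+\frac{\tau^2+\tau-2}{2a^2\tau^2}$. The asymptotic statement is as $|\widetilde\eta|\to\infty$. *)

theory Defs
  imports "HOL-Analysis.Analysis"
begin

definition frak_g :: "complex \<Rightarrow> complex \<Rightarrow> real \<Rightarrow> real \<Rightarrow> complex" where
  "frak_g a \<tau> \<eta> lam =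
     - of_real lam * a + 2 * of_real (\<eta>^2) * (1 - \<tau>) / \<tau> + (2 - \<tau>) / (2 * a^2 * \<tau>^2)"

definition Omega_p1 :: complex where
  "Omega_p1 = Complex (1 / (3 * sqrt 3)) (- 1 / 3)"

definition Omega_p2 :: complex where
  "Omega_p2 = Complex (1 - 1 / (3 * sqrt 3)) (- 1 / 3)"

definition Omega_path :: "real \<Rightarrow> complex" where
  "Omega_path = linepath 0 Omega_p1 +++ linepath Omega_p1 Omega_p2 +++ linepath Omega_p2 1"

definition Omega :: "complex set" where
  "Omega = path_image Omega_path"

definition z0 :: complex where
  "z0 = of_real (sin (4 * pi / 15) / sin (17 * pi / 30)) * exp (\<i> * of_real (pi / 6))"

definition Lambda :: "complex set" where
  "Lambda = closed_segment 0 z0 \<union>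
            {z0 + of_real t * exp (\<i> * of_real (3 * pi / 5)) | t. t > 0}"

definition Omega_tilde :: "real \<Rightarrow> real \<Rightarrow> complex set" where
  "Omega_tilde C \<eta> = {\<tau> \<in> Omega. cmod \<tau> \<le> C * \<bar>\<eta>\<bar> powr (-1/2)}"

definition Lambda_tilde :: "real \<Rightarrow> complex set" where
  "Lambda_tilde \<eta> = {a \<in> Lambda. cmod a \<le> \<bar>\<eta>\<bar> powr (-1/2)}"

text \<open>Integral of f along the part of the path p (parametrised on [0,1]) lying in S.\<close>
definition path_part_domain :: "(real \<Rightarrow> complex) \<Rightarrow> complex set \<Rightarrow> real set" where
  "path_part_domain p S = {t \<in> {0..1}. p t \<in> S}"

definition path_part_integrand ::
  "(real \<Rightarrow> complex) \<Rightarrow> (complex \<Rightarrow> complex) \<Rightarrow> real \<Rightarrow> complex" where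
  "path_part_integrand p f t = f (p t) * vector_derivative p (at t within {0..1})"

definition integrand36 :: "real \<Rightarrow> complex \<Rightarrow> real \<Rightarrow> real \<Rightarrow> complex \<Rightarrow> complex" where
  "integrand36 \<gamma> a \<eta> lam \<tau> =
     \<tau> powr (- of_real \<gamma>) * exp (frak_g a 1 \<eta> lam - frak_g a \<tau> \<eta> lam)"

end

theory Submission imports Defs begin

definition Hs :: "real \<Rightarrow> complex \<Rightarrow> complex \<Rightarrow> complex" where
 "Hs \<eta> b \<tau> = - 2 * of_real (\<eta>^2) * (1 - \<tau>) / \<tau> + b * (\<tau> - 1) * (\<tau> + 2) / \<tau>^2"
definition Pp :: "real \<Rightarrow> complex \<Rightarrow> complex \<Rightarrow> complex" where
 "Pp \<eta> b \<tau> = 2 * of_real (\<eta>^2) * \<tau> + b * (4 - \<tau>)"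
definition Tg :: "real \<Rightarrow> complex \<Rightarrow> complex" where
 "Tg \<gamma> \<tau> = \<tau> powr (- of_real \<gamma>)"
definition ff :: "real \<Rightarrow> real \<Rightarrow> complex \<Rightarrow> complex \<Rightarrow> complex" where
 "ff \<gamma> \<eta> b \<tau> = Tg \<gamma> \<tau> * exp (Hs \<eta> b \<tau>)"
definition Gf :: "real \<Rightarrow> real \<Rightarrow> complex \<Rightarrow> complex \<Rightarrow> complex" where
 "Gf \<gamma> \<eta> b \<tau> = \<tau>^3 * Tg \<gamma> \<tau> * exp (Hs \<eta> b \<tau>) / Pp \<eta> b \<tau>"
definition Qq :: "real \<Rightarrow> real \<Rightarrow> complex \<Rightarrow> complex \<Rightarrow> complex" where
 "Qq \<gamma> \<eta> b \<tau> = (3 - of_real \<gamma>) * Pp \<eta> b \<tau> - \<tau> * (2 * of_real (\<eta>^2) - b)"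
definition Rf :: "real \<Rightarrow> real \<Rightarrow> complex \<Rightarrow> complex \<Rightarrow> complex" where
 "Rf \<gamma> \<eta> b \<tau> = Tg \<gamma> \<tau> * exp (Hs \<eta> b \<tau>) * \<tau>^2 * Qq \<gamma> \<eta> b \<tau> / (Pp \<eta> b \<tau>)^2"

lemma integrand_eq:
  assumes "a \<noteq> 0" "\<tau> \<noteq> 0"
  shows "integrand36 \<gamma> a \<eta> lam \<tau> = ff \<gamma> \<eta> (1 / (2 * a^2)) \<tau>"
proof -
  have "frak_g a 1 \<eta> lam - frak_g a \<tau> \<eta> lam = Hs \<eta> (1 / (2 * a^2)) \<tau>"
    using assms unfolding frak_g_def Hs_def by (simp add: field_simps) (simp add: algebra_simps eval_nat_numeral)
  then show ?thesis unfolding integrand36_def ff_def Tg_def by simp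
qed

lemma Hs_deriv:
  assumes "\<tau> \<noteq> 0"
  shows "(Hs \<eta> b has_field_derivative Pp \<eta> b \<tau> / \<tau>^3) (at \<tau>)"
proof -
  define K where "K = 2 * complex_of_real (\<eta>^2)"
  have e: "Hs \<eta> b x = (\<lambda>v. K + b - K * v + b * v - 2 * b * v ^ 2) (inverse x)" if "x \<in> -{0}" for x
    using that unfolding Hs_def K_def by (simp add: field_simps power2_eq_square) (simp add: algebra_simps)?
  have d1: "((\<lambda>v. K + b - K * v + b * v - 2 * b * v ^ 2) has_field_derivative (- K + b - 4 * b * inverse \<tau>)) (at (inverse \<tau>))"
    by (auto intro!: derivative_eq_intros)
  have d2: "(inverse has_field_derivative -(inverse \<tau> ^ 2)) (at \<tau>)"
    using DERIV_inverse[OF assms] by (simp add: eval_nat_numeral)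
  have d3: "((\<lambda>x. (\<lambda>v. K + b - K * v + b * v - 2 * b * v ^ 2) (inverse x)) has_field_derivative (- K + b - 4 * b * inverse \<tau>) * -(inverse \<tau> ^ 2)) (at \<tau>)"
    by (rule DERIV_chain2[OF d1 d2])
  moreover have "(- K + b - 4 * b * inverse \<tau>) * -(inverse \<tau> ^ 2) = Pp \<eta> b \<tau> / \<tau>^3"
    using assms by (simp add: Pp_def K_def field_simps power2_eq_square power3_eq_cube)
  ultimately have "((\<lambda>x. (\<lambda>v. K + b - K * v + b * v - 2 * b * v ^ 2) (inverse x)) has_field_derivative Pp \<eta> b \<tau> / \<tau>^3) (at \<tau>)"
    by simp
  then show ?thesis
    by (rule has_field_derivative_transform_within_open[where S="-{0}"]) (use assms in \<open>auto simp only: e\<close>)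
qed

lemma not_nonpos_Re: "Re z > 0 \<Longrightarrow> z \<notin> \<real>\<^sub>\<le>\<^sub>0"
  by (auto simp: complex_nonpos_Reals_iff)

lemma Tg_deriv:
  assumes "Re \<tau> > 0"
  shows "(Tg \<gamma> has_field_derivative (- of_real \<gamma>) * Tg \<gamma> \<tau> / \<tau>) (at \<tau>)"
proof -
  have nz: "\<tau> \<noteq> 0" using assms by auto
  have "(Tg \<gamma> has_field_derivative (- of_real \<gamma>) * \<tau> powr (- of_real \<gamma> - 1)) (at \<tau>)"
    unfolding Tg_def[abs_def] by (rule has_field_derivative_powr[OF not_nonpos_Re[OF assms]])
  moreover have "\<tau> powr (- of_real \<gamma> - 1) = Tg \<gamma> \<tau> / \<tau>"
    using nz unfolding Tg_def powr_def by (simp add: algebra_simps exp_diff)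
  ultimately show ?thesis by simp
qed

lemma Pp_deriv: "(Pp \<eta> b has_field_derivative (2 * of_real (\<eta>^2) - b)) (at \<tau>)"
  unfolding Pp_def[abs_def] by (auto intro!: derivative_eq_intros)

lemma Gf_deriv:
  assumes "Re \<tau> > 0" "Pp \<eta> b \<tau> \<noteq> 0"
  shows "(Gf \<gamma> \<eta> b has_field_derivative ff \<gamma> \<eta> b \<tau> + Rf \<gamma> \<eta> b \<tau>) (at \<tau>)"
proof -
  have nz: "\<tau> \<noteq> 0" using assms by auto
  have dT: "(Tg \<gamma> has_field_derivative (- of_real \<gamma>) * Tg \<gamma> \<tau> / \<tau>) (at \<tau>)"
    by (rule Tg_deriv[OF assms(1)])
  have dE: "((\<lambda>x. exp (Hs \<eta> b x)) has_field_derivative exp (Hs \<eta> b \<tau>) * (Pp \<eta> b \<tau> / \<tau>^3)) (at \<tau>)"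
    by (rule DERIV_chain2[OF DERIV_exp Hs_deriv[OF nz]])
  have dC: "((\<lambda>x. x^3) has_field_derivative 3 * \<tau>^2) (at \<tau>)"
    by (auto intro!: derivative_eq_intros simp: eval_nat_numeral)
  note d1 = DERIV_mult[OF dC dT]
  note d2 = DERIV_mult[OF d1 dE]
  note d3 = DERIV_divide[OF d2 Pp_deriv assms(2)]
  have eqf: "Gf \<gamma> \<eta> b = (\<lambda>x. x ^ 3 * Tg \<gamma> x * exp (Hs \<eta> b x) / Pp \<eta> b x)"
    by (rule ext) (simp add: Gf_def)
  show ?thesis unfolding eqf
    apply (rule DERIV_cong[OF d3])
    using nz assms(2) unfolding ff_def Rf_def Qq_def
    by (simp add: field_simps power2_eq_square power3_eq_cube)
qed

lemma Rf_cont: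
  assumes "Re \<tau> > 0" "Pp \<eta> b \<tau> \<noteq> 0"
  shows "isCont (Rf \<gamma> \<eta> b) \<tau>"
proof -
  have nz: "\<tau> \<noteq> 0" using assms by auto
  have cp: "isCont (Pp \<eta> b) \<tau>" unfolding Pp_def[abs_def] by (intro continuous_intros)
  show ?thesis unfolding Rf_def[abs_def] Tg_def Hs_def Qq_def
    using assms nz cp not_nonpos_Re[OF assms(1)] by (auto intro!: continuous_intros)
qed

lemma seg_integral:
  fixes \<alpha> \<beta> :: complex and lo hi :: real
  assumes "lo \<le> hi"
    and reg: "\<And>t. t \<in> {lo..hi} \<Longrightarrow> Re (\<alpha> + of_real t * \<beta>) > 0 \<and> Pp \<eta> b (\<alpha> + of_real t * \<beta>) \<noteq> 0"
  shows "(\<lambda>t. Rf \<gamma> \<eta> b (\<alpha> + of_real t * \<beta>) * \<beta>) integrable_on {lo..hi}"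
    and "((\<lambda>t. ff \<gamma> \<eta> b (\<alpha> + of_real t * \<beta>) * \<beta>) has_integral
          (Gf \<gamma> \<eta> b (\<alpha> + of_real hi * \<beta>) - Gf \<gamma> \<eta> b (\<alpha> + of_real lo * \<beta>)
           - integral {lo..hi} (\<lambda>t. Rf \<gamma> \<eta> b (\<alpha> + of_real t * \<beta>) * \<beta>))) {lo..hi}"
proof -
  have dl: "((\<lambda>t. \<alpha> + of_real t * \<beta>) has_vector_derivative \<beta>) (at x)" for x :: real
    by (auto intro!: derivative_eq_intros)
  have cont: "continuous_on {lo..hi} (\<lambda>t. Rf \<gamma> \<eta> b (\<alpha> + of_real t * \<beta>) * \<beta>)"
  proof (rule continuous_at_imp_continuous_on, intro ballI)
    fix x assume "x \<in> {lo..hi}"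
    then have c1: "isCont (Rf \<gamma> \<eta> b) (\<alpha> + of_real x * \<beta>)" using reg Rf_cont by blast
    have c2: "isCont (\<lambda>t. \<alpha> + of_real t * \<beta>) x" by (intro continuous_intros)
    have "isCont (\<lambda>t. Rf \<gamma> \<eta> b (\<alpha> + of_real t * \<beta>)) x" by (rule isCont_o2[OF c2 c1])
    then show "isCont (\<lambda>t. Rf \<gamma> \<eta> b (\<alpha> + of_real t * \<beta>) * \<beta>) x"
      by (rule continuous_mult[OF _ continuous_const])
  qed
  show int: "(\<lambda>t. Rf \<gamma> \<eta> b (\<alpha> + of_real t * \<beta>) * \<beta>) integrable_on {lo..hi}"
    by (rule integrable_continuous_interval[OF cont])
  have ftc: "((\<lambda>t. (ff \<gamma> \<eta> b (\<alpha> + of_real t * \<beta>) + Rf \<gamma> \<eta> b (\<alpha> + of_real t * \<beta>)) * \<beta>) has_integral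
          (Gf \<gamma> \<eta> b (\<alpha> + of_real hi * \<beta>) - Gf \<gamma> \<eta> b (\<alpha> + of_real lo * \<beta>))) {lo..hi}"
  proof (rule fundamental_theorem_of_calculus[OF assms(1), where f="\<lambda>t. Gf \<gamma> \<eta> b (\<alpha> + of_real t * \<beta>)"])
    fix x assume x: "x \<in> {lo..hi}"
    have "((Gf \<gamma> \<eta> b \<circ> (\<lambda>t. \<alpha> + of_real t * \<beta>)) has_vector_derivative
        \<beta> * (ff \<gamma> \<eta> b (\<alpha> + of_real x * \<beta>) + Rf \<gamma> \<eta> b (\<alpha> + of_real x * \<beta>))) (at x)"
      using reg[OF x] by (intro field_vector_diff_chain_at[OF dl] Gf_deriv) auto
    then show "((\<lambda>t. Gf \<gamma> \<eta> b (\<alpha> + of_real t * \<beta>)) has_vector_derivative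
        (ff \<gamma> \<eta> b (\<alpha> + of_real x * \<beta>) + Rf \<gamma> \<eta> b (\<alpha> + of_real x * \<beta>)) * \<beta>) (at x within {lo..hi})"
      by (auto simp: o_def mult.commute intro: has_vector_derivative_at_within)
  qed
  have "((\<lambda>t. (ff \<gamma> \<eta> b (\<alpha> + of_real t * \<beta>) + Rf \<gamma> \<eta> b (\<alpha> + of_real t * \<beta>)) * \<beta> - Rf \<gamma> \<eta> b (\<alpha> + of_real t * \<beta>) * \<beta>) has_integral
          (Gf \<gamma> \<eta> b (\<alpha> + of_real hi * \<beta>) - Gf \<gamma> \<eta> b (\<alpha> + of_real lo * \<beta>)
           - integral {lo..hi} (\<lambda>t. Rf \<gamma> \<eta> b (\<alpha> + of_real t * \<beta>) * \<beta>))) {lo..hi}"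
    by (rule has_integral_diff[OF ftc int[unfolded has_integral_integral]])
  then show "((\<lambda>t. ff \<gamma> \<eta> b (\<alpha> + of_real t * \<beta>) * \<beta>) has_integral
          (Gf \<gamma> \<eta> b (\<alpha> + of_real hi * \<beta>) - Gf \<gamma> \<eta> b (\<alpha> + of_real lo * \<beta>)
           - integral {lo..hi} (\<lambda>t. Rf \<gamma> \<eta> b (\<alpha> + of_real t * \<beta>) * \<beta>))) {lo..hi}"
    by (simp add: distrib_right)
qed

lemma Re_Hs_le:
  assumes "\<tau> \<noteq> 0"
  shows "Re (Hs \<eta> b \<tau>) \<le> - 2 * \<eta>^2 * ((Re \<tau> - (cmod \<tau>)^2) / (cmod \<tau>)^2)
           + cmod b * cmod (\<tau> - 1) * cmod (\<tau> + 2) / (cmod \<tau>)^2"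
proof -
  have n2: "(cmod \<tau>)^2 > 0" using assms by simp
  have "Re (- 2 * of_real (\<eta>^2) * (1 - \<tau>) / \<tau>) = - 2 * \<eta>^2 * Re ((1 - \<tau>) / \<tau>)"
    apply (simp add: Re_divide) by (auto simp: algebra_simps)
  also have "Re ((1 - \<tau>) / \<tau>) = (Re \<tau> - (cmod \<tau>)^2) / (cmod \<tau>)^2"
    unfolding Re_divide cmod_power2 by (simp add: algebra_simps power2_eq_square)
  finally have A: "Re (- 2 * of_real (\<eta>^2) * (1 - \<tau>) / \<tau>) = - 2 * \<eta>^2 * ((Re \<tau> - (cmod \<tau>)^2) / (cmod \<tau>)^2)" .
  have "Re (b * (\<tau> - 1) * (\<tau> + 2) / \<tau>^2) \<le> cmod (b * (\<tau> - 1) * (\<tau> + 2) / \<tau>^2)"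
    by (rule complex_Re_le_cmod)
  also have "\<dots> = cmod b * cmod (\<tau> - 1) * cmod (\<tau> + 2) / (cmod \<tau>)^2"
    by (simp add: norm_mult norm_divide norm_power)
  finally show ?thesis unfolding Hs_def using A by simp
qed

lemma Pp_lower:
  assumes "cmod b \<le> \<bar>\<eta>\<bar> / 2" "cmod \<tau> \<le> 1" "\<bar>\<eta>\<bar> * cmod \<tau> \<ge> 5/2"
  shows "\<eta>^2 * cmod \<tau> \<le> cmod (Pp \<eta> b \<tau>)"
proof -
  have "cmod (b * (4 - \<tau>)) \<le> (\<bar>\<eta>\<bar> / 2) * 5"
  proof -
    have "cmod (4 - \<tau>) \<le> 5" using norm_triangle_ineq4[of 4 \<tau>] assms(2) by simp
    then show ?thesis unfolding norm_mult using assms(1)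
      by (intro mult_mono) auto
  qed
  moreover have "cmod (2 * of_real (\<eta>^2) * \<tau>) = 2 * \<eta>^2 * cmod \<tau>"
    by (simp add: norm_mult norm_power)
  moreover have "cmod (Pp \<eta> b \<tau>) \<ge> cmod (2 * of_real (\<eta>^2) * \<tau>) - cmod (b * (4 - \<tau>))"
    unfolding Pp_def by (rule norm_diff_ineq)
  moreover have "(\<bar>\<eta>\<bar> / 2) * 5 \<le> \<eta>^2 * cmod \<tau>"
  proof -
    have "\<eta>^2 * cmod \<tau> = \<bar>\<eta>\<bar> * (\<bar>\<eta>\<bar> * cmod \<tau>)" by (simp add: power2_eq_square abs_mult_self_eq)
    also have "\<dots> \<ge> \<bar>\<eta>\<bar> * (5/2)" using assms(3) by (intro mult_left_mono) auto
    finally show ?thesis by simp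
  qed
  ultimately show ?thesis by linarith
qed

lemma abs_le_sq: "\<bar>x::real\<bar> \<ge> 1 \<Longrightarrow> \<bar>x\<bar> \<le> x^2"
proof -
  assume a: "\<bar>x\<bar> \<ge> 1"
  have "\<bar>x\<bar> * 1 \<le> \<bar>x\<bar> * \<bar>x\<bar>" using a by (intro mult_left_mono) auto
  then show ?thesis by (simp add: power2_eq_square abs_mult_self_eq)
qed

lemma Tg_norm: "cmod (Tg \<gamma> \<tau>) = cmod \<tau> powr (- \<gamma>)"
  unfolding Tg_def by (subst norm_powr_real_powr') auto

lemma Tg_bound:
  assumes "0 < r" "r \<le> 1" "r \<le> cmod \<tau>" "cmod \<tau> \<le> 1"
  shows "cmod (Tg \<gamma> \<tau>) \<le> r powr (- \<bar>\<gamma>\<bar>)"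
proof (cases "\<gamma> \<ge> 0")
  case True
  then show ?thesis unfolding Tg_norm using assms by (simp add: powr_mono2')
next
  case False
  have "cmod \<tau> powr (- \<gamma>) \<le> 1" using False assms by (intro powr_le1) auto
  moreover have "1 powr \<gamma> \<le> r powr \<gamma>" using False assms by (intro powr_mono2') auto
  ultimately show ?thesis unfolding Tg_norm using False by simp
qed

lemma Pp_upper:
  assumes "cmod b \<le> \<bar>\<eta>\<bar> / 2" "cmod \<tau> \<le> 1" "\<bar>\<eta>\<bar> \<ge> 1"
  shows "cmod (Pp \<eta> b \<tau>) \<le> 5 * \<eta>^2"
proof -
  have "cmod (Pp \<eta> b \<tau>) \<le> cmod (2 * of_real (\<eta>^2) * \<tau>) + cmod (b * (4 - \<tau>))"
    unfolding Pp_def by (rule norm_triangle_ineq)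
  moreover have "cmod (2 * of_real (\<eta>^2) * \<tau>) \<le> 2 * \<eta>^2"
    using assms(2) by (simp add: norm_mult norm_power) (simp add: mult_left_le)
  moreover have "cmod (b * (4 - \<tau>)) \<le> (\<bar>\<eta>\<bar> / 2) * 5"
  proof -
    have "cmod (4 - \<tau>) \<le> 5" using norm_triangle_ineq4[of 4 \<tau>] assms(2) by simp
    then show ?thesis unfolding norm_mult using assms(1)
      by (intro mult_mono) auto
  qed
  moreover have "\<bar>\<eta>\<bar> \<le> \<eta>^2" using assms(3) by (rule abs_le_sq)
  ultimately show ?thesis by linarith
qed

lemma Qq_upper:
  assumes "cmod b \<le> \<bar>\<eta>\<bar> / 2" "cmod \<tau> \<le> 1" "\<bar>\<eta>\<bar> \<ge> 1"
  shows "cmod (Qq \<gamma> \<eta> b \<tau>) \<le> (5 * \<bar>3 - \<gamma>\<bar> + 3) * \<eta>^2"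
proof -
  have e1: "\<bar>\<eta>\<bar> \<le> \<eta>^2" using assms(3) by (rule abs_le_sq)
  have "cmod (Qq \<gamma> \<eta> b \<tau>) \<le> cmod ((3 - of_real \<gamma>) * Pp \<eta> b \<tau>) + cmod (\<tau> * (2 * of_real (\<eta>^2) - b))"
    unfolding Qq_def by (rule norm_triangle_ineq4)
  moreover have "cmod ((3 - of_real \<gamma>) * Pp \<eta> b \<tau>) \<le> \<bar>3 - \<gamma>\<bar> * (5 * \<eta>^2)"
  proof -
    have "cmod (3 - complex_of_real \<gamma>) = \<bar>3 - \<gamma>\<bar>"
      by (metis norm_of_real of_real_diff of_real_numeral)
    then show ?thesis unfolding norm_mult using Pp_upper[OF assms]
      by (intro mult_mono) auto
  qed
  moreover have "cmod (\<tau> * (2 * of_real (\<eta>^2) - b)) \<le> 1 * (3 * \<eta>^2)"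
  proof -
    have "cmod (2 * of_real (\<eta>^2) - b) \<le> cmod (2 * complex_of_real (\<eta>^2)) + cmod b"
      by (rule norm_triangle_ineq4)
    also have "\<dots> \<le> 3 * \<eta>^2" using assms(1) e1 by (simp add: norm_mult norm_power)
    finally show ?thesis unfolding norm_mult using assms(2) by (intro mult_mono) auto
  qed
  ultimately show ?thesis by (simp add: algebra_simps)
qed

lemma Rf_bound:
  assumes "cmod b \<le> \<bar>\<eta>\<bar> / 2" "cmod \<tau> \<le> 1" "\<bar>\<eta>\<bar> \<ge> 1" "\<bar>\<eta>\<bar> * cmod \<tau> \<ge> 5/2"
  shows "cmod (Rf \<gamma> \<eta> b \<tau>) \<le> cmod (Tg \<gamma> \<tau>) * exp (Re (Hs \<eta> b \<tau>)) * ((5 * \<bar>3 - \<gamma>\<bar> + 3) / \<eta>^2)"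
proof -
  define Kq where "Kq = 5 * \<bar>3 - \<gamma>\<bar> + 3"
  have Kq: "Kq \<ge> 0" unfolding Kq_def by simp
  have tn: "cmod \<tau> > 0" using assms(4) by (cases "cmod \<tau> = 0") auto
  have en: "\<eta> \<noteq> 0" using assms(3) by auto
  have P: "\<eta>^2 * cmod \<tau> \<le> cmod (Pp \<eta> b \<tau>)" by (rule Pp_lower[OF assms(1,2,4)])
  have Q: "cmod (Qq \<gamma> \<eta> b \<tau>) \<le> Kq * \<eta>^2" unfolding Kq_def by (rule Qq_upper[OF assms(1-3)])
  have pos: "0 < \<eta>^2 * cmod \<tau>" using tn en by simp
  have "(cmod \<tau>)^2 * cmod (Qq \<gamma> \<eta> b \<tau>) / (cmod (Pp \<eta> b \<tau>))^2 \<le> (cmod \<tau>)^2 * (Kq * \<eta>^2) / (\<eta>^2 * cmod \<tau>)^2"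
    using Q P pos Kq by (intro frac_le mult_left_mono power_mono mult_nonneg_nonneg) auto
  also have "\<dots> = Kq / \<eta>^2" using tn en by (simp add: field_simps power2_eq_square)
  finally have r: "(cmod \<tau>)^2 * cmod (Qq \<gamma> \<eta> b \<tau>) / (cmod (Pp \<eta> b \<tau>))^2 \<le> Kq / \<eta>^2" .
  have "cmod (Rf \<gamma> \<eta> b \<tau>) = cmod (Tg \<gamma> \<tau>) * exp (Re (Hs \<eta> b \<tau>)) * ((cmod \<tau>)^2 * cmod (Qq \<gamma> \<eta> b \<tau>) / (cmod (Pp \<eta> b \<tau>))^2)"
    unfolding Rf_def by (simp add: norm_mult norm_divide norm_power norm_exp_eq_Re)
  also have "\<dots> \<le> cmod (Tg \<gamma> \<tau>) * exp (Re (Hs \<eta> b \<tau>)) * (Kq / \<eta>^2)"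
    using r by (intro mult_left_mono) auto
  finally show ?thesis unfolding Kq_def .
qed

lemma Gf_bound:
  assumes "cmod b \<le> \<bar>\<eta>\<bar> / 2" "cmod \<tau> \<le> 1" "\<bar>\<eta>\<bar> \<ge> 1" "\<bar>\<eta>\<bar> * cmod \<tau> \<ge> 5/2"
  shows "cmod (Gf \<gamma> \<eta> b \<tau>) \<le> cmod (Tg \<gamma> \<tau>) * exp (Re (Hs \<eta> b \<tau>)) * (1 / \<eta>^2)"
proof -
  have tn: "cmod \<tau> > 0" using assms(4) by (cases "cmod \<tau> = 0") auto
  have en: "\<eta> \<noteq> 0" using assms(3) by auto
  have P: "\<eta>^2 * cmod \<tau> \<le> cmod (Pp \<eta> b \<tau>)" by (rule Pp_lower[OF assms(1,2,4)])
  have pos: "0 < \<eta>^2 * cmod \<tau>" using tn en by simp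
  have "(cmod \<tau>)^3 / cmod (Pp \<eta> b \<tau>) \<le> (cmod \<tau>)^3 / (\<eta>^2 * cmod \<tau>)"
    using P pos by (intro frac_le) auto
  also have "\<dots> = (cmod \<tau>)^2 / \<eta>^2" using tn en by (simp add: field_simps power2_eq_square power3_eq_cube)
  also have "\<dots> \<le> 1 / \<eta>^2" using assms(2) tn by (intro divide_right_mono) (auto simp: power_le_one)
  finally have r: "(cmod \<tau>)^3 / cmod (Pp \<eta> b \<tau>) \<le> 1 / \<eta>^2" .
  have "cmod (Gf \<gamma> \<eta> b \<tau>) = cmod (Tg \<gamma> \<tau>) * exp (Re (Hs \<eta> b \<tau>)) * ((cmod \<tau>)^3 / cmod (Pp \<eta> b \<tau>))"
    unfolding Gf_def by (simp add: norm_mult norm_divide norm_power norm_exp_eq_Re)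
  also have "\<dots> \<le> cmod (Tg \<gamma> \<tau>) * exp (Re (Hs \<eta> b \<tau>)) * (1 / \<eta>^2)"
    using r by (intro mult_left_mono) auto
  finally show ?thesis .
qed

definition kk :: real where "kk = 1 / (3 * sqrt 3)"

lemma kk_facts: "24/125 < kk" "kk < 193/1000" "kk^2 = 1/27"
proof -
  have s1: "1.73 < sqrt 3" by (rule real_less_rsqrt) (simp add: power2_eq_square)
  have s2: "sqrt 3 < 1.7321" by (rule real_less_lsqrt) (simp_all add: power2_eq_square)
  show "24/125 < kk" unfolding kk_def using s2 by (simp add: field_simps)
  show "kk < 193/1000" unfolding kk_def using s1 by (simp add: field_simps)
  show "kk^2 = 1/27" unfolding kk_def by (simp add: power2_eq_square field_simps)
qed

lemma p1_eq: "Omega_p1 = Complex kk (-1/3)" unfolding Omega_p1_def kk_def by simp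
lemma p2_eq: "Omega_p2 = Complex (1 - kk) (-1/3)" unfolding Omega_p2_def kk_def by simp

definition "al2 = 3 * Omega_p1 - 2 * Omega_p2"
definition "be1 = 2 * Omega_p1"
definition "be2 = 4 * (Omega_p2 - Omega_p1)"
definition "al3 = 4 * Omega_p2 - 3"
definition "be3 = 4 * (1 - Omega_p2)"

lemma path_1: "t \<le> 1/2 \<Longrightarrow> Omega_path t = 0 + of_real t * be1"
  unfolding Omega_path_def joinpaths_def linepath_def be1_def
  by (simp add: scaleR_conv_of_real)

lemma path_2: "1/2 \<le> t \<Longrightarrow> t \<le> 3/4 \<Longrightarrow> Omega_path t = al2 + of_real t * be2"
proof (cases "t = 1/2")
  case True
  show ?thesis unfolding True Omega_path_def joinpaths_def linepath_def be2_def al2_def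
    by (simp add: scaleR_conv_of_real algebra_simps)
next
  case False
  assume "1/2 \<le> t" "t \<le> 3/4"
  with False have "\<not> t \<le> 1/2" "2 * t - 1 \<le> 1/2" by auto
  then show ?thesis unfolding Omega_path_def joinpaths_def linepath_def be2_def al2_def
    by (simp add: scaleR_conv_of_real algebra_simps)
qed

lemma path_3: "3/4 \<le> t \<Longrightarrow> Omega_path t = al3 + of_real t * be3"
proof (cases "t = 3/4")
  case True
  show ?thesis unfolding True Omega_path_def joinpaths_def linepath_def be3_def al3_def
    by (simp add: scaleR_conv_of_real algebra_simps)
next
  case False
  assume "3/4 \<le> t"
  with False have "\<not> t \<le> 1/2" "\<not> 2 * t - 1 \<le> 1/2" by auto
  then show ?thesis unfolding Omega_path_def joinpaths_def linepath_def be3_def al3_def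
    by (simp add: scaleR_conv_of_real algebra_simps)
qed

lemma seg1_ReIm: "Re (0 + of_real t * be1) = 2 * t * kk" "Im (0 + of_real t * be1) = - 2 * t / 3"
  unfolding be1_def p1_eq by simp_all
lemma seg2_ReIm: "Re (al2 + of_real t * be2) = 5 * kk - 2 + 4 * t * (1 - 2 * kk)" "Im (al2 + of_real t * be2) = - 1 / 3"
  unfolding be2_def al2_def p1_eq p2_eq by (simp_all add: algebra_simps)
lemma seg3_ReIm: "Re (al3 + of_real t * be3) = 1 - (4 - 4 * t) * kk" "Im (al3 + of_real t * be3) = - (4 - 4 * t) / 3"
  unfolding be3_def al3_def p2_eq by (simp_all add: algebra_simps)

lemma sq_ge_mult: "\<bar>x::real\<bar> \<ge> c \<Longrightarrow> 0 \<le> c \<Longrightarrow> c * \<bar>x\<bar> \<le> x^2"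
proof -
  assume a: "\<bar>x\<bar> \<ge> c" "0 \<le> c"
  have "c * \<bar>x\<bar> \<le> \<bar>x\<bar> * \<bar>x\<bar>" using a by (intro mult_right_mono) auto
  then show ?thesis by (simp add: power2_eq_square abs_mult_self_eq)
qed

lemma ReHs_12:
  assumes "\<tau> \<noteq> 0" "cmod b \<le> \<bar>\<eta>\<bar> / 2" "cmod (\<tau> - 1) \<le> 1" "cmod \<tau> \<le> 1" "0 < r" "r \<le> cmod \<tau>"
    "r^2 * \<bar>\<eta>\<bar> \<ge> 100" "(Re \<tau> - (cmod \<tau>)^2) / (cmod \<tau>)^2 \<ge> 1/25"
  shows "Re (Hs \<eta> b \<tau>) \<le> - (\<eta>^2) / 20"
proof -
  have t1: "- 2 * \<eta>^2 * ((Re \<tau> - (cmod \<tau>)^2) / (cmod \<tau>)^2) \<le> - 2 * \<eta>^2 * (1/25)"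
    using assms(8) by (intro mult_left_mono_neg) auto
  have p3: "cmod (\<tau> + 2) \<le> 3" using norm_triangle_ineq[of \<tau> 2] assms(4) by simp
  have "cmod b * cmod (\<tau> - 1) * cmod (\<tau> + 2) \<le> (\<bar>\<eta>\<bar> / 2) * 1 * 3"
    using assms(2,3) p3 by (intro mult_mono) auto
  moreover have "r^2 \<le> (cmod \<tau>)^2" using assms(5,6) by (intro power_mono) auto
  ultimately have "cmod b * cmod (\<tau> - 1) * cmod (\<tau> + 2) / (cmod \<tau>)^2 \<le> ((\<bar>\<eta>\<bar> / 2) * 1 * 3) / r^2"
    using assms(5) by (intro frac_le) auto
  also have "\<dots> \<le> 3 * \<eta>^2 / 200"
  proof -
    have "(\<bar>\<eta>\<bar> / 2) * 1 * 3 / r^2 = 3 * \<bar>\<eta>\<bar> / (2 * r^2)" by simp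
    also have "\<dots> \<le> 3 * \<bar>\<eta>\<bar> * (\<bar>\<eta>\<bar> / 100) / 2"
      using assms(5,7) apply (simp add: field_simps)
      by (rule mult_left_mono) (auto simp: algebra_simps)
    also have "\<dots> = 3 * \<eta>^2 / 200" by (simp add: power2_eq_square abs_mult_self_eq)
    finally show ?thesis .
  qed
  finally have t2: "cmod b * cmod (\<tau> - 1) * cmod (\<tau> + 2) / (cmod \<tau>)^2 \<le> 3 * \<eta>^2 / 200" .
  have "0 \<le> \<eta>^2" by simp
  then show ?thesis using Re_Hs_le[OF assms(1), of \<eta> b] t1 t2 by linarith
qed

lemma ReHs_3:
  assumes "\<tau> \<noteq> 0" "cmod b \<le> \<bar>\<eta>\<bar> / 2" "cmod (\<tau> - 1) \<le> 39/100 * w" "cmod \<tau> \<le> 1" "(cmod \<tau>)^2 \<ge> 3/5"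
    "0 \<le> w" "\<bar>\<eta>\<bar> \<ge> 40" "(Re \<tau> - (cmod \<tau>)^2) / (cmod \<tau>)^2 \<ge> w/25"
  shows "Re (Hs \<eta> b \<tau>) \<le> - (\<eta>^2) * w / 20"
proof -
  have t1: "- 2 * \<eta>^2 * ((Re \<tau> - (cmod \<tau>)^2) / (cmod \<tau>)^2) \<le> - 2 * \<eta>^2 * (w/25)"
    using assms(8) by (intro mult_left_mono_neg) auto
  have p3: "cmod (\<tau> + 2) \<le> 3" using norm_triangle_ineq[of \<tau> 2] assms(4) by simp
  have "cmod b * cmod (\<tau> - 1) * cmod (\<tau> + 2) \<le> (\<bar>\<eta>\<bar> / 2) * (39/100 * w) * 3"
    using assms(2,3,6) p3 by (intro mult_mono) auto
  then have "cmod b * cmod (\<tau> - 1) * cmod (\<tau> + 2) / (cmod \<tau>)^2 \<le> ((\<bar>\<eta>\<bar> / 2) * (39/100 * w) * 3) / 0.6"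
    using assms(5,6) by (intro frac_le) auto
  also have "\<dots> = 0.975 * (\<bar>\<eta>\<bar> * w)" by simp
  also have "\<dots> \<le> 0.975 * (\<eta>^2 / 40 * w)"
    using sq_ge_mult[OF assms(7)] assms(6) by (intro mult_left_mono mult_right_mono) auto
  finally have t2: "cmod b * cmod (\<tau> - 1) * cmod (\<tau> + 2) / (cmod \<tau>)^2 \<le> 0.975 * (\<eta>^2 / 40 * w)" .
  have nn: "0 \<le> \<eta>^2 * w" using assms(6) by simp
  have "Re (Hs \<eta> b \<tau>) \<le> - 2 * \<eta>^2 * ((Re \<tau> - (cmod \<tau>)^2) / (cmod \<tau>)^2)
           + cmod b * cmod (\<tau> - 1) * cmod (\<tau> + 2) / (cmod \<tau>)^2" by (rule Re_Hs_le[OF assms(1)])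
  also have "\<dots> \<le> - 2 * \<eta>^2 * (w/25) + 0.975 * (\<eta>^2 / 40 * w)" by (rule add_mono[OF t1 t2])
  also have "\<dots> = - (89/1600) * (\<eta>^2 * w)" by (simp add: algebra_simps)
  also have "\<dots> \<le> - (1/20) * (\<eta>^2 * w)" using assms(6) by simp
  also have "\<dots> = - (\<eta>^2) * w / 20" by simp
  finally show ?thesis .
qed

lemma cmod_sq_le1: "(cmod z)^2 \<le> 1 \<Longrightarrow> cmod z \<le> 1"
  by (simp add: power_le_one_iff)

lemma seg1_facts:
  fixes t r :: real
  assumes "0 < r" "r \<le> 1/6" "r / (4 * kk) \<le> t" "t \<le> 1/2"
  defines "\<tau> \<equiv> 0 + of_real t * be1"
  shows "Re \<tau> > 0" "\<tau> \<noteq> 0" "cmod \<tau> \<le> 1" "r \<le> cmod \<tau>" "cmod (\<tau> - 1) \<le> 1"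
    "(Re \<tau> - (cmod \<tau>)^2) / (cmod \<tau>)^2 \<ge> 1/25"
proof -
  note k = kk_facts
  have "r / (4 * kk) > 0" using assms(1) k by simp
  then have t0: "t > 0" using assms(3) by linarith
  have tk: "t * kk \<le> (1/2) * 0.193" using assms(4) k t0 by (intro mult_mono) auto
  have c2: "(cmod \<tau>)^2 = (4 * t * kk)^2"
    unfolding cmod_power2 \<tau>_def seg1_ReIm using k(3) by (simp add: power2_eq_square field_simps)
  have c: "cmod \<tau> = 4 * t * kk" by (rule power2_eq_imp_eq[OF c2]) (use t0 k in auto)
  show "Re \<tau> > 0" unfolding \<tau>_def seg1_ReIm using t0 k by simp
  then show "\<tau> \<noteq> 0" by auto
  show "cmod \<tau> \<le> 1" unfolding c using tk by simp
  show "r \<le> cmod \<tau>" unfolding c using assms(3) k by (simp add: field_simps)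
  have r1: "Re (\<tau> - 1) = 2 * t * kk - 1" "Im (\<tau> - 1) = - 2 * t / 3" unfolding \<tau>_def seg1_ReIm[symmetric] by simp_all
  have "(cmod (\<tau> - 1))^2 = (2 * t * kk - 1)^2 + (- 2 * t / 3)^2" unfolding cmod_power2 r1 ..
  also have "\<dots> = 4 * t^2 * kk^2 - 4 * t * kk + 1 + 4 * t^2 / 9" by (simp add: power2_eq_square algebra_simps)
  also have "\<dots> = 1 - 4 * t * kk + 16 * t^2 * kk^2" unfolding k(3) by simp
  also have "\<dots> = 1 - 4 * t * kk + (4 * t * kk)^2" by (simp add: power_mult_distrib)
  also have "\<dots> \<le> 1"
  proof -
    have "4 * t * kk \<le> 1" using tk by simp
    then have "(4 * t * kk) * (4 * t * kk) \<le> 1 * (4 * t * kk)" using t0 k by (intro mult_right_mono) auto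
    then show ?thesis by (simp add: power2_eq_square)
  qed
  finally show "cmod (\<tau> - 1) \<le> 1" by (rule cmod_sq_le1)
  have pos: "(cmod \<tau>)^2 > 0" using t0 k unfolding c by simp
  have ReT: "Re \<tau> = 2 * t * kk" unfolding \<tau>_def seg1_ReIm ..
  have "(Re \<tau> - (cmod \<tau>)^2) / (cmod \<tau>)^2 = 1 / (8 * t * kk) - 1"
    unfolding c ReT using t0 k by (simp add: field_simps power2_eq_square)
  also have "1 / (8 * t * kk) \<ge> 1 / (4 * kk)"
    using t0 k assms(4) by (intro divide_left_mono) auto
  moreover have "1 / (4 * kk) \<ge> 1.29" using k by (simp add: field_simps)
  ultimately show "(Re \<tau> - (cmod \<tau>)^2) / (cmod \<tau>)^2 \<ge> 1/25" by simp
qed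

lemma seg2_facts:
  fixes t r :: real
  assumes "0 < r" "r \<le> 1/6" "1/2 \<le> t" "t \<le> 3/4"
  defines "\<tau> \<equiv> al2 + of_real t * be2"
  shows "Re \<tau> > 0" "\<tau> \<noteq> 0" "cmod \<tau> \<le> 1" "r \<le> cmod \<tau>" "cmod (\<tau> - 1) \<le> 1"
    "(Re \<tau> - (cmod \<tau>)^2) / (cmod \<tau>)^2 \<ge> 1/25" "1/6 < cmod \<tau>"
proof -
  note k = kk_facts
  define x where "x = Re \<tau>"
  have x: "x = 5 * kk - 2 + 4 * t * (1 - 2 * kk)" unfolding x_def \<tau>_def seg2_ReIm ..
  have y: "Im \<tau> = - 1/3" unfolding \<tau>_def seg2_ReIm ..
  have "0 \<le> (4 * t - 2) * (1 - 2 * kk)" using assms(3) k by (intro mult_nonneg_nonneg) auto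
  then have xl: "kk \<le> x" unfolding x by (simp add: algebra_simps)
  have "0 \<le> (3 - 4 * t) * (1 - 2 * kk)" using assms(4) k by (intro mult_nonneg_nonneg) auto
  then have xu: "x \<le> 1 - kk" unfolding x by (simp add: algebra_simps)
  have x0: "24/125 < x" "x < 81/100" using xl xu k by auto
  have xx: "x * x \<le> 81/100 * (81/100)" using x0 by (intro mult_mono) auto
  have xx1: "x * x \<le> x" using mult_left_mono[of x 1 x] x0 by simp
  have c2: "(cmod \<tau>)^2 = x^2 + 1/9" unfolding cmod_power2 x_def y by (simp add: power2_eq_square)
  show "Re \<tau> > 0" using x0 x_def by simp
  then show "\<tau> \<noteq> 0" by auto
  have "(cmod \<tau>)^2 \<le> 1" unfolding c2 using xx by (simp add: power2_eq_square)
  then show "cmod \<tau> \<le> 1" by (rule cmod_sq_le1)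
  show "r \<le> cmod \<tau>" using abs_Re_le_cmod[of \<tau>] x0 x_def assms(2) by simp
  show "1/6 < cmod \<tau>" using abs_Re_le_cmod[of \<tau>] x0 x_def by simp
  have "(cmod (\<tau> - 1))^2 = (x - 1)^2 + 1/9" unfolding cmod_power2 x_def using y by (simp add: power2_eq_square)
  also have "\<dots> = x * x - 2 * x + 10/9" by (simp add: power2_eq_square algebra_simps)
  also have "\<dots> \<le> 1" using xx1 x0 by linarith
  finally show "cmod (\<tau> - 1) \<le> 1" by (rule cmod_sq_le1)
  have "0 \<le> (x - kk) * (1 - kk - x)" using xl xu by (intro mult_nonneg_nonneg) auto
  then have h: "x - x * x \<ge> kk - kk^2" by (simp add: algebra_simps power2_eq_square)
  have D: "(cmod \<tau>)^2 > 0" unfolding c2 by (simp add: add_nonneg_pos)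
  have "1/25 * (cmod \<tau>)^2 \<le> Re \<tau> - (cmod \<tau>)^2"
    unfolding c2 x_def[symmetric] using h k xx by (simp add: power2_eq_square)
  then show "(Re \<tau> - (cmod \<tau>)^2) / (cmod \<tau>)^2 \<ge> 1/25" using D by (simp add: le_divide_eq)
qed

lemma seg3_facts:
  fixes t r :: real
  assumes "0 < r" "r \<le> 1/6" "3/4 \<le> t" "t \<le> 1"
  defines "\<tau> \<equiv> al3 + of_real t * be3" and "w \<equiv> 4 - 4 * t"
  shows "Re \<tau> > 0" "\<tau> \<noteq> 0" "cmod \<tau> \<le> 1" "r \<le> cmod \<tau>" "1/2 \<le> cmod \<tau>" "(cmod \<tau>)^2 \<ge> 3/5"
    "cmod (\<tau> - 1) \<le> 39/100 * w" "0 \<le> w" "w \<le> 1"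
    "(Re \<tau> - (cmod \<tau>)^2) / (cmod \<tau>)^2 \<ge> w/25"
proof -
  note k = kk_facts
  show w0: "0 \<le> w" "w \<le> 1" unfolding w_def using assms(3,4) by auto
  define m where "m = w * kk"
  have "w * kk \<le> 1 * kk" using w0 k by (intro mult_right_mono) auto
  then have m0: "0 \<le> m" "m \<le> 193/1000" unfolding m_def using w0 k by (simp, linarith)
  have x: "Re \<tau> = 1 - m" unfolding \<tau>_def seg3_ReIm m_def w_def ..
  have y: "Im \<tau> = - w / 3" unfolding \<tau>_def seg3_ReIm w_def ..
  have w2: "(w / 3)^2 = 3 * m^2" unfolding m_def using k(3) by (simp add: power2_eq_square field_simps)
  have c2: "(cmod \<tau>)^2 = 1 - 2 * m + 4 * m^2" unfolding cmod_power2 x y using w2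
    by (simp add: power2_eq_square algebra_simps)
  have mm: "m * m \<le> m * (193/1000)" using m0 by (intro mult_left_mono) auto
  show "Re \<tau> > 0" using x m0 by simp
  then show "\<tau> \<noteq> 0" by auto
  have "(cmod \<tau>)^2 \<le> 1" unfolding c2 using mm m0 by (simp add: power2_eq_square)
  then show "cmod \<tau> \<le> 1" by (rule cmod_sq_le1)
  have "0 \<le> m * m" using m0 by simp
  then have "1 - 2 * m + 4 * m^2 \<ge> 3/5" unfolding power2_eq_square using m0 by linarith
  then show c6: "(cmod \<tau>)^2 \<ge> 3/5" using c2 by simp
  have "(1/2)^2 \<le> (cmod \<tau>)^2" using c6 by (simp add: power2_eq_square)
  then show h2: "1/2 \<le> cmod \<tau>" by (rule power2_le_imp_le) simp
  then show "r \<le> cmod \<tau>" using assms(2) by simp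
  have r1: "Re (\<tau> - 1) = - m" "Im (\<tau> - 1) = - w / 3" using x y by simp_all
  have "(cmod (\<tau> - 1))^2 = (2 * m)^2" unfolding cmod_power2 r1 using w2 by (simp add: power2_eq_square)
  then have "cmod (\<tau> - 1) = 2 * m" by (rule power2_eq_imp_eq) (use m0 in auto)
  moreover have "w * kk \<le> w * (193/1000)" using k w0 by (intro mult_left_mono) auto
  ultimately show "cmod (\<tau> - 1) \<le> 39/100 * w" unfolding m_def using w0 by linarith
  have D: "(cmod \<tau>)^2 > 0" using c6 by linarith
  have N: "Re \<tau> - (cmod \<tau>)^2 = w * kk - 4 * (w * w) * kk^2" unfolding x c2 m_def by (simp add: power2_eq_square algebra_simps)
  have "w * w \<le> w" using mult_left_mono[of w 1 w] w0 by simp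
  then have ww: "(w * w) * (4 * kk^2) \<le> w * (4 * kk^2)" by (rule mult_right_mono) simp
  have "w * (kk - 4 * kk^2) = w * kk - w * (4 * kk^2)" by (simp add: right_diff_distrib)
  moreover have "4 * (w * w) * kk^2 = (w * w) * (4 * kk^2)" by simp
  ultimately have N1: "Re \<tau> - (cmod \<tau>)^2 \<ge> w * (kk - 4 * kk^2)" unfolding N using ww by linarith
  have "w * (24/125 - 4/27) \<le> w * (kk - 4/27)" using k w0 by (intro mult_left_mono) auto
  then have "w * (kk - 4 * kk^2) \<ge> w / 25" unfolding k(3) using w0 by simp
  with N1 have Nw: "Re \<tau> - (cmod \<tau>)^2 \<ge> w / 25" by linarith
  have "(Re \<tau> - (cmod \<tau>)^2) * (cmod \<tau>)^2 \<le> (Re \<tau> - (cmod \<tau>)^2) * 1"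
    using Nw w0 \<open>(cmod \<tau>)^2 \<le> 1\<close> by (intro mult_left_mono) auto
  then have "Re \<tau> - (cmod \<tau>)^2 \<le> (Re \<tau> - (cmod \<tau>)^2) / (cmod \<tau>)^2" using D by (simp add: le_divide_eq)
  with Nw show "(Re \<tau> - (cmod \<tau>)^2) / (cmod \<tau>)^2 \<ge> w/25" by linarith
qed

lemma be1_norm: "cmod be1 = 4 * kk"
proof -
  have "(cmod be1)^2 = (4 * kk)^2"
    unfolding cmod_power2 be1_def p1_eq using kk_facts(3) by (simp add: power2_eq_square field_simps)
  then show ?thesis by (rule power2_eq_imp_eq) (use kk_facts in auto)
qed

lemma path_in_Omega: "t \<in> {0..1} \<Longrightarrow> Omega_path t \<in> Omega"
  unfolding Omega_def path_image_def by auto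

lemma dom_eq:
  assumes "0 < r" "r \<le> 1/6" "r = C * \<bar>\<eta>\<bar> powr (-1/2)"
  shows "path_part_domain Omega_path (Omega - Omega_tilde C \<eta>) = {r / (4 * kk)<..1}"
proof -
  note k = kk_facts
  have "t \<in> path_part_domain Omega_path (Omega - Omega_tilde C \<eta>) \<longleftrightarrow> t \<in> {r / (4 * kk)<..1}" for t
  proof -
    have "t \<in> path_part_domain Omega_path (Omega - Omega_tilde C \<eta>) \<longleftrightarrow> t \<in> {0..1} \<and> r < cmod (Omega_path t)"
      unfolding path_part_domain_def Omega_tilde_def using path_in_Omega assms(3) by auto
    also have "\<dots> \<longleftrightarrow> t \<in> {r / (4 * kk)<..1}"
    proof (cases "t \<le> 1/2")
      case True
      have "t \<in> {0..1} \<and> r < cmod (Omega_path t) \<longleftrightarrow> 0 \<le> t \<and> r < 4 * kk * t"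
      proof
        assume h: "t \<in> {0..1} \<and> r < cmod (Omega_path t)"
        then show "0 \<le> t \<and> r < 4 * kk * t" unfolding path_1[OF True] using be1_norm by (auto simp: norm_mult mult.commute)
      next
        assume h: "0 \<le> t \<and> r < 4 * kk * t"
        then show "t \<in> {0..1} \<and> r < cmod (Omega_path t)" unfolding path_1[OF True] using be1_norm True by (auto simp: norm_mult mult.commute mult.left_commute)
      qed
      also have "\<dots> \<longleftrightarrow> t \<in> {r / (4 * kk)<..1}"
      proof -
        have e: "r < 4 * kk * t \<longleftrightarrow> r / (4 * kk) < t" using k by (simp add: pos_divide_less_eq mult.commute)
        have "r / (4 * kk) > 0" using k assms(1) by simp
        then show ?thesis unfolding e using True by auto
      qed
      finally show ?thesis .
    next
      case False
      have "r / (4 * kk) < 1/2" using k assms(1,2) by (simp add: field_simps)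
      moreover have "t \<le> 1 \<Longrightarrow> r < cmod (Omega_path t)"
      proof -
        assume t1: "t \<le> 1"
        show "r < cmod (Omega_path t)"
        proof (cases "t \<le> 3/4")
          case True
          then show ?thesis using seg2_facts(7)[OF assms(1,2), of t] path_2[of t] False True assms(2) by simp
        next
          case F2: False
          then show ?thesis using seg3_facts(5)[OF assms(1,2), of t] path_3[of t] t1 assms(2) by simp
        qed
      qed
      ultimately show ?thesis using False by auto
    qed
    finally show ?thesis .
  qed
  then show ?thesis by blast
qed

lemma PI_eq:
  assumes "0 \<le> lo" "hi \<le> 1" "\<And>t. t \<in> {lo..hi} \<Longrightarrow> Omega_path t = \<alpha> + of_real t * \<beta>"
    "t \<in> {lo<..<hi}" "a \<noteq> 0" "\<alpha> + of_real t * \<beta> \<noteq> 0"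
  shows "path_part_integrand Omega_path (integrand36 \<gamma> a \<eta> lam) t = ff \<gamma> \<eta> (1 / (2 * a^2)) (\<alpha> + of_real t * \<beta>) * \<beta>"
proof -
  have dl: "((\<lambda>t. \<alpha> + of_real t * \<beta>) has_vector_derivative \<beta>) (at t)"
    by (auto intro!: derivative_eq_intros)
  have "(Omega_path has_vector_derivative \<beta>) (at t)"
    by (rule has_vector_derivative_transform_within_open[OF dl, of "{lo<..<hi}"]) (use assms(3,4) in auto)
  then have "(Omega_path has_vector_derivative \<beta>) (at t within {0..1})"
    by (rule has_vector_derivative_at_within)
  then have vd: "vector_derivative Omega_path (at t within {0..1}) = \<beta>"
    using assms(1,2,4) by (intro vector_derivative_within_closed_interval) auto
  have "Omega_path t = \<alpha> + of_real t * \<beta>" using assms(3,4) by auto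
  then show ?thesis unfolding path_part_integrand_def vd using integrand_eq[OF assms(5,6)] by simp
qed

lemma reg_from:
  assumes "cmod b \<le> \<bar>\<eta>\<bar> / 2" "\<bar>\<eta>\<bar> \<ge> 1" "r \<le> cmod \<tau>" "cmod \<tau> \<le> 1" "\<bar>\<eta>\<bar> * r \<ge> 5/2" "Re \<tau> > 0"
  shows "Re \<tau> > 0 \<and> Pp \<eta> b \<tau> \<noteq> 0" "\<bar>\<eta>\<bar> * cmod \<tau> \<ge> 5/2"
proof -
  have "\<bar>\<eta>\<bar> * r \<le> \<bar>\<eta>\<bar> * cmod \<tau>" using assms(3) by (intro mult_left_mono) auto
  then show e: "\<bar>\<eta>\<bar> * cmod \<tau> \<ge> 5/2" using assms(5) by linarith
  have "\<eta>^2 * cmod \<tau> \<le> cmod (Pp \<eta> b \<tau>)" by (rule Pp_lower[OF assms(1,4) e])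
  moreover have "\<eta>^2 * cmod \<tau> > 0" using assms(2,6) by (auto intro!: mult_pos_pos)
  ultimately show "Re \<tau> > 0 \<and> Pp \<eta> b \<tau> \<noteq> 0" using assms(6) by auto
qed

lemma main_has_integral:
  fixes \<gamma> \<eta> C r lam :: real and a b :: complex
  assumes a0: "a \<noteq> 0" and bdef: "b = 1 / (2 * a^2)" and bb: "cmod b \<le> \<bar>\<eta>\<bar> / 2" and e1: "\<bar>\<eta>\<bar> \<ge> 1"
    and r0: "0 < r" and r6: "r \<le> 1/6" and er: "\<bar>\<eta>\<bar> * r \<ge> 5/2" and rdef: "r = C * \<bar>\<eta>\<bar> powr (-1/2)"
  defines "t0 \<equiv> r / (4 * kk)"
  defines "R1 \<equiv> integral {t0..1/2} (\<lambda>t. Rf \<gamma> \<eta> b (0 + of_real t * be1) * be1)"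
      and "R2 \<equiv> integral {1/2..3/4} (\<lambda>t. Rf \<gamma> \<eta> b (al2 + of_real t * be2) * be2)"
      and "R3 \<equiv> integral {3/4..1} (\<lambda>t. Rf \<gamma> \<eta> b (al3 + of_real t * be3) * be3)"
  shows "(path_part_integrand Omega_path (integrand36 \<gamma> a \<eta> lam) has_integral
          (Gf \<gamma> \<eta> b 1 - Gf \<gamma> \<eta> b (0 + of_real t0 * be1) - (R1 + R2 + R3)))
         (path_part_domain Omega_path (Omega - Omega_tilde C \<eta>))"
proof -
  note k = kk_facts
  define PI where "PI = path_part_integrand Omega_path (integrand36 \<gamma> a \<eta> lam)"
  have t0p: "0 < t0" unfolding t0_def using r0 k by simp
  have t0h: "t0 < 1/2" unfolding t0_def using r0 r6 k by (simp add: field_simps)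
  have reg1: "Re (0 + of_real t * be1) > 0 \<and> Pp \<eta> b (0 + of_real t * be1) \<noteq> 0" if "t \<in> {t0..1/2}" for t
    using that seg1_facts[OF r0 r6, of t] reg_from[OF bb e1 _ _ er] unfolding t0_def by auto
  have I1: "((\<lambda>t. ff \<gamma> \<eta> b (0 + of_real t * be1) * be1) has_integral
      (Gf \<gamma> \<eta> b (0 + of_real (1/2) * be1) - Gf \<gamma> \<eta> b (0 + of_real t0 * be1) - R1)) {t0..1/2}"
    unfolding R1_def by (rule seg_integral(2)) (use t0h reg1 in auto)
  have J1: "(PI has_integral (Gf \<gamma> \<eta> b (0 + of_real (1/2) * be1) - Gf \<gamma> \<eta> b (0 + of_real t0 * be1) - R1)) {t0..1/2}"
  proof (rule has_integral_spike_finite[OF _ _ I1, of "{t0, 1/2}"])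
    fix t :: real assume t: "t \<in> {t0..1/2} - {t0, 1/2}"
    show "PI t = ff \<gamma> \<eta> b (0 + of_real t * be1) * be1"
      unfolding PI_def bdef
      by (rule PI_eq[of t0 "1/2"]) (use t t0p path_1 seg1_facts(2)[OF r0 r6, of t] a0 in \<open>auto simp: t0_def\<close>)
  qed simp
  have reg2: "Re (al2 + of_real t * be2) > 0 \<and> Pp \<eta> b (al2 + of_real t * be2) \<noteq> 0" if "t \<in> {1/2..3/4}" for t
    using that seg2_facts[OF r0 r6, of t] reg_from[OF bb e1 _ _ er] by auto
  have I2: "((\<lambda>t. ff \<gamma> \<eta> b (al2 + of_real t * be2) * be2) has_integral
      (Gf \<gamma> \<eta> b (al2 + of_real (3/4) * be2) - Gf \<gamma> \<eta> b (al2 + of_real (1/2) * be2) - R2)) {1/2..3/4}"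
    unfolding R2_def by (rule seg_integral(2)) (use reg2 in auto)
  have J2: "(PI has_integral (Gf \<gamma> \<eta> b (al2 + of_real (3/4) * be2) - Gf \<gamma> \<eta> b (al2 + of_real (1/2) * be2) - R2)) {1/2..3/4}"
  proof (rule has_integral_spike_finite[OF _ _ I2, of "{1/2, 3/4}"])
    fix t :: real assume t: "t \<in> {1/2..3/4} - {1/2, 3/4}"
    show "PI t = ff \<gamma> \<eta> b (al2 + of_real t * be2) * be2"
      unfolding PI_def bdef
      by (rule PI_eq[of "1/2" "3/4"]) (use t path_2 seg2_facts(2)[OF r0 r6, of t] a0 in auto)
  qed simp
  have reg3: "Re (al3 + of_real t * be3) > 0 \<and> Pp \<eta> b (al3 + of_real t * be3) \<noteq> 0" if "t \<in> {3/4..1}" for t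
    using that seg3_facts[OF r0 r6, of t] reg_from[OF bb e1 _ _ er] by auto
  have I3: "((\<lambda>t. ff \<gamma> \<eta> b (al3 + of_real t * be3) * be3) has_integral
      (Gf \<gamma> \<eta> b (al3 + of_real 1 * be3) - Gf \<gamma> \<eta> b (al3 + of_real (3/4) * be3) - R3)) {3/4..1}"
    unfolding R3_def by (rule seg_integral(2)) (use reg3 in auto)
  have J3: "(PI has_integral (Gf \<gamma> \<eta> b (al3 + of_real 1 * be3) - Gf \<gamma> \<eta> b (al3 + of_real (3/4) * be3) - R3)) {3/4..1}"
  proof (rule has_integral_spike_finite[OF _ _ I3, of "{3/4, 1}"])
    fix t :: real assume t: "t \<in> {3/4..1} - {3/4, 1}"
    show "PI t = ff \<gamma> \<eta> b (al3 + of_real t * be3) * be3"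
      unfolding PI_def bdef
      by (rule PI_eq[of "3/4" "1"]) (use t path_3 seg3_facts(2)[OF r0 r6, of t] a0 in auto)
  qed simp
  have q1: "0 + of_real (1/2) * be1 = al2 + of_real (1/2) * be2" using path_1[of "1/2"] path_2[of "1/2"] by simp
  have q2: "al2 + of_real (3/4) * be2 = al3 + of_real (3/4) * be3" using path_2[of "3/4"] path_3[of "3/4"] by simp
  have q3: "al3 + of_real 1 * be3 = 1" unfolding al3_def be3_def by simp
  have J12: "(PI has_integral (Gf \<gamma> \<eta> b (al2 + of_real (3/4) * be2) - Gf \<gamma> \<eta> b (0 + of_real t0 * be1) - (R1 + R2))) {t0..3/4}"
    using has_integral_combine[OF _ _ J1 J2] t0h unfolding q1 by (simp add: algebra_simps)
  have J123: "(PI has_integral (Gf \<gamma> \<eta> b 1 - Gf \<gamma> \<eta> b (0 + of_real t0 * be1) - (R1 + R2 + R3))) {t0..1}"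
    using has_integral_combine[OF _ _ J12 J3] t0h unfolding q2 q3 by (simp add: algebra_simps)
  have dom: "path_part_domain Omega_path (Omega - Omega_tilde C \<eta>) = {t0<..1}"
    unfolding t0_def by (rule dom_eq[OF r0 r6 rdef])
  have "(PI has_integral (Gf \<gamma> \<eta> b 1 - Gf \<gamma> \<eta> b (0 + of_real t0 * be1) - (R1 + R2 + R3))) {t0<..1}"
  proof (subst has_integral_spike_set_eq)
    show "negligible {x \<in> {t0<..1} - {t0..1}. PI x \<noteq> 0}" by (rule negligible_subset[of "{}"]) auto
    show "negligible {x \<in> {t0..1} - {t0<..1}. PI x \<noteq> 0}" by (rule negligible_subset[of "{t0}"]) auto
  qed (rule J123)
  then show ?thesis unfolding dom PI_def .
qed

lemma Gf_one:
  assumes "2 * of_real (\<eta>^2) + 3 * b \<noteq> 0"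
  shows "Gf \<gamma> \<eta> b 1 = 1 / (2 * of_real (\<eta>^2) + 3 * b)"
proof -
  have "Tg \<gamma> 1 = 1" unfolding Tg_def by (simp add: powr_def)
  moreover have "Hs \<eta> b 1 = 0" unfolding Hs_def by simp
  moreover have "Pp \<eta> b 1 = 2 * of_real (\<eta>^2) + 3 * b" unfolding Pp_def by simp
  ultimately show ?thesis unfolding Gf_def by simp
qed

lemma G1_est:
  assumes "cmod b \<le> \<bar>\<eta>\<bar> / 2" "\<bar>\<eta>\<bar> \<ge> 2"
  shows "cmod (Gf \<gamma> \<eta> b 1 - 1 / (2 * of_real (\<eta>^2))) \<le> 1 / \<bar>\<eta>\<bar>^3"
proof -
  define E :: complex where "E = 2 * of_real (\<eta>^2)"
  define P where "P = E + 3 * b"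
  have nE: "cmod E = 2 * \<eta>^2" unfolding E_def by (simp add: norm_mult norm_power)
  have s2: "2 * \<bar>\<eta>\<bar> \<le> \<eta>^2" using sq_ge_mult[OF assms(2)] by simp
  have "cmod P \<ge> cmod E - cmod (3 * b)" unfolding P_def by (rule norm_diff_ineq)
  moreover have "cmod (3 * b) \<le> 3 * (\<bar>\<eta>\<bar> / 2)" using assms(1) by (simp add: norm_mult)
  ultimately have nP: "cmod P \<ge> \<eta>^2" using nE s2 by linarith
  have e0: "\<eta> \<noteq> 0" using assms(2) by auto
  have P0: "P \<noteq> 0" using nP e0 by auto
  have E0: "E \<noteq> 0" using e0 unfolding E_def by simp
  have "Gf \<gamma> \<eta> b 1 - 1 / E = - (3 * b) / (P * E)"
    unfolding Gf_one[OF P0[unfolded P_def E_def]] E_def[symmetric] P_def[symmetric]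
    using P0 E0 unfolding P_def by (simp add: field_simps)
  then have "cmod (Gf \<gamma> \<eta> b 1 - 1 / E) = cmod (3 * b) / (cmod P * (2 * \<eta>^2))"
    by (simp add: norm_divide norm_mult nE)
  also have "\<dots> \<le> (3 * (\<bar>\<eta>\<bar> / 2)) / (\<eta>^2 * (2 * \<eta>^2))"
    using assms(1) nP e0 by (intro frac_le mult_mono) (auto simp: norm_mult)
  also have "\<dots> = (3/4) / \<bar>\<eta>\<bar>^3"
  proof -
    have u: "\<bar>\<eta>\<bar> > 0" using e0 by simp
    have "\<eta>^2 = \<bar>\<eta>\<bar>^2" by simp
    then show ?thesis using u by (simp only:) (simp add: field_simps power2_eq_square power3_eq_cube)
  qed
  also have "\<dots> \<le> 1 / \<bar>\<eta>\<bar>^3" by (intro divide_right_mono) auto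
  finally show ?thesis unfolding E_def .
qed

lemma expsmall:
  fixes s r \<gamma> :: real
  assumes "s \<ge> 1" "s \<ge> 20 * (\<bar>\<gamma>\<bar> + 1)" "1 / s \<le> r" "r \<le> 1"
  shows "r powr (- \<bar>\<gamma>\<bar>) * exp (- (s^2) / 20) \<le> 1 / s"
proof -
  have s0: "s > 0" using assms(1) by simp
  have "r powr (- \<bar>\<gamma>\<bar>) \<le> (1 / s) powr (- \<bar>\<gamma>\<bar>)" using assms s0 by (intro powr_mono2') auto
  also have "\<dots> = s powr \<bar>\<gamma>\<bar>" using s0 by (simp add: powr_minus_divide powr_divide)
  finally have m: "r powr (- \<bar>\<gamma>\<bar>) \<le> s powr \<bar>\<gamma>\<bar>" .
  have "s powr \<bar>\<gamma>\<bar> * s = exp ((\<bar>\<gamma>\<bar> + 1) * ln s)" using s0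
    by (simp add: powr_def exp_add distrib_right)
  also have "\<dots> \<le> exp (s^2 / 20)"
  proof -
    have "ln s \<le> s" using ln_less_self[OF s0] by simp
    then have "(\<bar>\<gamma>\<bar> + 1) * ln s \<le> (\<bar>\<gamma>\<bar> + 1) * s" by (intro mult_left_mono) auto
    also have "\<dots> \<le> s / 20 * s" using assms(2) s0 by (intro mult_right_mono) auto
    also have "\<dots> = s^2 / 20" by (simp add: power2_eq_square)
    finally show ?thesis by simp
  qed
  finally have "s powr \<bar>\<gamma>\<bar> * s \<le> exp (s^2 / 20)" .
  then have "s powr \<bar>\<gamma>\<bar> \<le> exp (s^2 / 20) / s" using s0 by (simp add: le_divide_eq)
  then have "s powr \<bar>\<gamma>\<bar> * exp (- (s^2) / 20) \<le> exp (s^2 / 20) / s * exp (- (s^2) / 20)"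
    by (intro mult_right_mono) auto
  also have "\<dots> = 1 / s" by (simp add: exp_minus field_simps)
  finally have "s powr \<bar>\<gamma>\<bar> * exp (- (s^2) / 20) \<le> 1 / s" .
  moreover have "r powr (- \<bar>\<gamma>\<bar>) * exp (- (s^2) / 20) \<le> s powr \<bar>\<gamma>\<bar> * exp (- (s^2) / 20)"
    using m by (intro mult_right_mono) auto
  ultimately show ?thesis by linarith
qed

lemma exp_int:
  assumes "l > 0"
  shows "((\<lambda>t. exp (- l * (1 - t))) has_integral (1 - exp (- l / 4)) / l) {3/4..1::real}"
proof -
  have "((\<lambda>t. exp (- l * (1 - t))) has_integral (exp (- l * (1 - 1)) / l - exp (- l * (1 - 3/4)) / l)) {3/4..1::real}"
  proof (rule fundamental_theorem_of_calculus)
    fix x :: real assume "x \<in> {3/4..1}"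
    have "((\<lambda>t. exp (- l * (1 - t)) / l) has_real_derivative (exp (- l * (1 - x)) * (- l * (0 - 1)) / l)) (at x)"
      by (auto intro!: derivative_eq_intros)
    then show "((\<lambda>t. exp (- l * (1 - t)) / l) has_vector_derivative exp (- l * (1 - x))) (at x within {3/4..1})"
      using assms by (auto simp: has_real_derivative_iff_has_vector_derivative intro: has_vector_derivative_at_within)
  qed simp
  then show ?thesis by (simp add: diff_divide_distrib)
qed

lemma seg_bound:
  fixes f :: "real \<Rightarrow> complex"
  assumes "f integrable_on {lo..hi}" "lo \<le> hi" "\<And>t. t \<in> {lo..hi} \<Longrightarrow> cmod (f t) \<le> B" "0 \<le> B"
  shows "cmod (integral {lo..hi} f) \<le> B * (hi - lo)"
  using has_integral_bound[OF assms(4), of f "integral {lo..hi} f" lo hi] assms by (simp add: has_integral_integral)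

lemma cube_abs: "1 / \<bar>x::real\<bar> * (c / x^2) = c / \<bar>x\<bar>^3"
proof -
  have e: "x^2 = \<bar>x\<bar>^2" by simp
  show ?thesis unfolding e by (cases "x = 0") (simp_all add: field_simps power2_eq_square power3_eq_cube)
qed

lemma small_12:
  fixes \<gamma> \<eta> r :: real and b \<tau> :: complex
  assumes bb: "cmod b \<le> \<bar>\<eta>\<bar> / 2" and e40: "\<bar>\<eta>\<bar> \<ge> 40" and eg: "\<bar>\<eta>\<bar> \<ge> 20 * (\<bar>\<gamma>\<bar> + 1)"
    and r0: "0 < r" and r6: "r \<le> 1/6" and er: "\<bar>\<eta>\<bar> * r \<ge> 5/2" and rr: "r^2 * \<bar>\<eta>\<bar> \<ge> 100" and rs: "1 / \<bar>\<eta>\<bar> \<le> r"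
    and t0: "\<tau> \<noteq> 0" "Re \<tau> > 0" "r \<le> cmod \<tau>" "cmod \<tau> \<le> 1" "cmod (\<tau> - 1) \<le> 1"
    "(Re \<tau> - (cmod \<tau>)^2) / (cmod \<tau>)^2 \<ge> 1/25"
  shows "cmod (Rf \<gamma> \<eta> b \<tau>) \<le> (5 * \<bar>3 - \<gamma>\<bar> + 3) / \<bar>\<eta>\<bar>^3"
    and "cmod (Gf \<gamma> \<eta> b \<tau>) \<le> 1 / \<bar>\<eta>\<bar>^3"
proof -
  define Kq where "Kq = 5 * \<bar>3 - \<gamma>\<bar> + 3"
  have Kq0: "Kq \<ge> 0" unfolding Kq_def by simp
  have e1: "\<bar>\<eta>\<bar> \<ge> 1" using e40 by simp
  have ec: "\<bar>\<eta>\<bar> * cmod \<tau> \<ge> 5/2" using reg_from(2)[OF bb e1 t0(3,4) er t0(2)] .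
  have T: "cmod (Tg \<gamma> \<tau>) \<le> r powr (- \<bar>\<gamma>\<bar>)" using Tg_bound[OF r0 _ t0(3,4)] r6 by simp
  have H: "Re (Hs \<eta> b \<tau>) \<le> - (\<eta>^2) / 20" by (rule ReHs_12[OF t0(1) bb t0(5,4) r0 t0(3) rr t0(6)])
  have X: "r powr (- \<bar>\<gamma>\<bar>) * exp (- (\<bar>\<eta>\<bar>^2) / 20) \<le> 1 / \<bar>\<eta>\<bar>"
    by (rule expsmall[OF e1 eg rs]) (use r6 in simp)
  have TE: "cmod (Tg \<gamma> \<tau>) * exp (Re (Hs \<eta> b \<tau>)) \<le> 1 / \<bar>\<eta>\<bar>"
  proof -
    have "cmod (Tg \<gamma> \<tau>) * exp (Re (Hs \<eta> b \<tau>)) \<le> r powr (- \<bar>\<gamma>\<bar>) * exp (- (\<bar>\<eta>\<bar>^2) / 20)"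
      using T H by (intro mult_mono) auto
    then show ?thesis using X by linarith
  qed
  have en: "\<eta>^2 > 0" using e1 by simp
  have "cmod (Rf \<gamma> \<eta> b \<tau>) \<le> cmod (Tg \<gamma> \<tau>) * exp (Re (Hs \<eta> b \<tau>)) * (Kq / \<eta>^2)"
    unfolding Kq_def by (rule Rf_bound[OF bb t0(4) e1 ec])
  also have "\<dots> \<le> 1 / \<bar>\<eta>\<bar> * (Kq / \<eta>^2)" using TE Kq0 en by (intro mult_right_mono) auto
  also have "\<dots> = Kq / \<bar>\<eta>\<bar>^3" by (rule cube_abs)
  finally show "cmod (Rf \<gamma> \<eta> b \<tau>) \<le> (5 * \<bar>3 - \<gamma>\<bar> + 3) / \<bar>\<eta>\<bar>^3" unfolding Kq_def .
  have "cmod (Gf \<gamma> \<eta> b \<tau>) \<le> cmod (Tg \<gamma> \<tau>) * exp (Re (Hs \<eta> b \<tau>)) * (1 / \<eta>^2)"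
    by (rule Gf_bound[OF bb t0(4) e1 ec])
  also have "\<dots> \<le> 1 / \<bar>\<eta>\<bar> * (1 / \<eta>^2)" using TE en by (intro mult_right_mono) auto
  also have "\<dots> = 1 / \<bar>\<eta>\<bar>^3" by (rule cube_abs)
  finally show "cmod (Gf \<gamma> \<eta> b \<tau>) \<le> 1 / \<bar>\<eta>\<bar>^3" .
qed

lemma small_3:
  fixes \<gamma> \<eta> r t :: real and b :: complex
  assumes bb: "cmod b \<le> \<bar>\<eta>\<bar> / 2" and e40: "\<bar>\<eta>\<bar> \<ge> 40"
    and r0: "0 < r" and r6: "r \<le> 1/6" and er: "\<bar>\<eta>\<bar> * r \<ge> 5/2" and t: "3/4 \<le> t" "t \<le> 1"
  shows "cmod (Rf \<gamma> \<eta> b (al3 + of_real t * be3) * be3) \<le>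
     (2 * (1/2) powr (- \<bar>\<gamma>\<bar>) * (5 * \<bar>3 - \<gamma>\<bar> + 3) / \<eta>^2) * exp (- (\<eta>^2 / 5) * (1 - t))"
proof -
  define \<tau> where "\<tau> = al3 + of_real t * be3"
  define Kq where "Kq = 5 * \<bar>3 - \<gamma>\<bar> + 3"
  define M3 where "M3 = (1/2::real) powr (- \<bar>\<gamma>\<bar>)"
  note f = seg3_facts[OF r0 r6 t, folded \<tau>_def]
  have Kq0: "Kq \<ge> 0" unfolding Kq_def by simp
  have e1: "\<bar>\<eta>\<bar> \<ge> 1" using e40 by simp
  have ec: "\<bar>\<eta>\<bar> * cmod \<tau> \<ge> 5/2" using reg_from(2)[OF bb e1 f(4,3) er f(1)] .
  have T: "cmod (Tg \<gamma> \<tau>) \<le> M3" unfolding M3_def using Tg_bound[of "1/2" \<tau>] f by simp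
  have H: "Re (Hs \<eta> b \<tau>) \<le> - (\<eta>^2) * (4 - 4 * t) / 20"
    by (rule ReHs_3[OF f(2) bb f(7,3,6,8) e40 f(10)])
  have "- (\<eta>^2) * (4 - 4 * t) / 20 = - (\<eta>^2 / 5) * (1 - t)" by (simp add: field_simps)
  then have H': "Re (Hs \<eta> b \<tau>) \<le> - (\<eta>^2 / 5) * (1 - t)" using H by linarith
  then have "exp (Re (Hs \<eta> b \<tau>)) \<le> exp (- (\<eta>^2 / 5) * (1 - t))" by (simp only: exp_le_cancel_iff)
  then have TE: "cmod (Tg \<gamma> \<tau>) * exp (Re (Hs \<eta> b \<tau>)) \<le> M3 * exp (- (\<eta>^2 / 5) * (1 - t))"
    using T by (intro mult_mono) (auto simp: M3_def)
  have en: "\<eta>^2 > 0" using e1 by simp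
  have b3: "cmod be3 \<le> 2"
  proof -
    have "(cmod be3)^2 = (8 * kk)^2"
      unfolding cmod_power2 be3_def p2_eq using kk_facts(3) by (simp add: power2_eq_square field_simps)
    then have "cmod be3 = 8 * kk" by (rule power2_eq_imp_eq) (use kk_facts in auto)
    then show ?thesis using kk_facts by simp
  qed
  have "cmod (Rf \<gamma> \<eta> b \<tau> * be3) = cmod (Rf \<gamma> \<eta> b \<tau>) * cmod be3" by (simp add: norm_mult)
  also have "\<dots> \<le> (cmod (Tg \<gamma> \<tau>) * exp (Re (Hs \<eta> b \<tau>)) * (Kq / \<eta>^2)) * 2"
    using Rf_bound[OF bb f(3) e1 ec, of \<gamma>] b3 unfolding Kq_def by (intro mult_mono) auto
  also have "\<dots> \<le> (M3 * exp (- (\<eta>^2 / 5) * (1 - t)) * (Kq / \<eta>^2)) * 2"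
    using TE Kq0 en by (intro mult_right_mono) auto
  also have "\<dots> = (2 * M3 * Kq / \<eta>^2) * exp (- (\<eta>^2 / 5) * (1 - t))" by simp
  finally show ?thesis unfolding \<tau>_def M3_def Kq_def .
qed

lemma main_est:
  fixes \<gamma> \<eta> r :: real and b :: complex
  assumes bb: "cmod b \<le> \<bar>\<eta>\<bar> / 2" and e40: "\<bar>\<eta>\<bar> \<ge> 40" and eg: "\<bar>\<eta>\<bar> \<ge> 20 * (\<bar>\<gamma>\<bar> + 1)"
    and r0: "0 < r" and r6: "r \<le> 1/6" and er: "\<bar>\<eta>\<bar> * r \<ge> 5/2" and rr: "r^2 * \<bar>\<eta>\<bar> \<ge> 100" and rs: "1 / \<bar>\<eta>\<bar> \<le> r"
  defines "t0 \<equiv> r / (4 * kk)"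
  defines "R1 \<equiv> integral {t0..1/2} (\<lambda>t. Rf \<gamma> \<eta> b (0 + of_real t * be1) * be1)"
      and "R2 \<equiv> integral {1/2..3/4} (\<lambda>t. Rf \<gamma> \<eta> b (al2 + of_real t * be2) * be2)"
      and "R3 \<equiv> integral {3/4..1} (\<lambda>t. Rf \<gamma> \<eta> b (al3 + of_real t * be3) * be3)"
  shows "cmod (Gf \<gamma> \<eta> b 1 - Gf \<gamma> \<eta> b (0 + of_real t0 * be1) - (R1 + R2 + R3) - 1 / (2 * of_real (\<eta>^2)))
     \<le> (2 + 2 * (5 * \<bar>3 - \<gamma>\<bar> + 3) + 10 * (1/2) powr (- \<bar>\<gamma>\<bar>) * (5 * \<bar>3 - \<gamma>\<bar> + 3)) / \<bar>\<eta>\<bar>^3"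
proof -
  note k = kk_facts
  define Kq where "Kq = 5 * \<bar>3 - \<gamma>\<bar> + 3"
  define M3 where "M3 = (1/2::real) powr (- \<bar>\<gamma>\<bar>)"
  have Kq0: "Kq \<ge> 0" unfolding Kq_def by simp
  have M30: "M3 \<ge> 0" unfolding M3_def by simp
  have e1: "\<bar>\<eta>\<bar> \<ge> 1" using e40 by simp
  have en: "\<bar>\<eta>\<bar> > 0" using e1 by simp
  have t0p: "0 < t0" unfolding t0_def using r0 k by simp
  have t0h: "t0 < 1/2" unfolding t0_def using r0 r6 k by (simp add: field_simps)
  have reg1: "Re (0 + of_real t * be1) > 0 \<and> Pp \<eta> b (0 + of_real t * be1) \<noteq> 0" if "t \<in> {t0..1/2}" for t
    using that seg1_facts[OF r0 r6, of t] reg_from[OF bb e1 _ _ er] unfolding t0_def by auto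
  have reg2: "Re (al2 + of_real t * be2) > 0 \<and> Pp \<eta> b (al2 + of_real t * be2) \<noteq> 0" if "t \<in> {1/2..3/4}" for t
    using that seg2_facts[OF r0 r6, of t] reg_from[OF bb e1 _ _ er] by auto
  have reg3: "Re (al3 + of_real t * be3) > 0 \<and> Pp \<eta> b (al3 + of_real t * be3) \<noteq> 0" if "t \<in> {3/4..1}" for t
    using that seg3_facts[OF r0 r6, of t] reg_from[OF bb e1 _ _ er] by auto
  have int1: "(\<lambda>t. Rf \<gamma> \<eta> b (0 + of_real t * be1) * be1) integrable_on {t0..1/2}"
    by (rule seg_integral(1)) (use t0h reg1 in auto)
  have int2: "(\<lambda>t. Rf \<gamma> \<eta> b (al2 + of_real t * be2) * be2) integrable_on {1/2..3/4}"
    by (rule seg_integral(1)) (use reg2 in auto)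
  have int3: "(\<lambda>t. Rf \<gamma> \<eta> b (al3 + of_real t * be3) * be3) integrable_on {3/4..1}"
    by (rule seg_integral(1)) (use reg3 in auto)
  have s1: "cmod (Rf \<gamma> \<eta> b (0 + of_real t * be1)) \<le> Kq / \<bar>\<eta>\<bar>^3"
       "cmod (Gf \<gamma> \<eta> b (0 + of_real t * be1)) \<le> 1 / \<bar>\<eta>\<bar>^3" if "t \<in> {t0..1/2}" for t
    using small_12[OF bb e40 eg r0 r6 er rr rs, of "0 + of_real t * be1"] seg1_facts[OF r0 r6, of t] that
    unfolding Kq_def t0_def by auto
  have s2: "cmod (Rf \<gamma> \<eta> b (al2 + of_real t * be2)) \<le> Kq / \<bar>\<eta>\<bar>^3" if "t \<in> {1/2..3/4}" for t
    using small_12[OF bb e40 eg r0 r6 er rr rs, of "al2 + of_real t * be2"] seg2_facts[OF r0 r6, of t] that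
    unfolding Kq_def by auto
  have nb1: "cmod be1 \<le> 1" using be1_norm k by simp
  have nb2: "cmod be2 \<le> 4"
  proof -
    have e: "be2 = of_real (4 * (1 - 2 * kk))" unfolding be2_def p1_eq p2_eq by (simp add: complex_eq_iff)
    have "cmod be2 = \<bar>4 * (1 - 2 * kk)\<bar>" unfolding e by (rule norm_of_real)
    then show ?thesis using k by simp
  qed
  have B: "0 \<le> Kq / \<bar>\<eta>\<bar>^3" using Kq0 by simp
  have R1b: "cmod R1 \<le> Kq / \<bar>\<eta>\<bar>^3"
  proof -
    have "cmod R1 \<le> Kq / \<bar>\<eta>\<bar>^3 * (1/2 - t0)"
      unfolding R1_def
    proof (rule seg_bound[OF int1])
      fix t assume t: "t \<in> {t0..1/2}"
      have "cmod (Rf \<gamma> \<eta> b (0 + of_real t * be1) * be1) \<le> Kq / \<bar>\<eta>\<bar>^3 * 1"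
        unfolding norm_mult using s1(1)[OF t] nb1 B by (intro mult_mono) auto
      then show "cmod (Rf \<gamma> \<eta> b (0 + of_real t * be1) * be1) \<le> Kq / \<bar>\<eta>\<bar>^3" by simp
    qed (use t0h B in auto)
    also have "\<dots> \<le> Kq / \<bar>\<eta>\<bar>^3 * 1" using B t0p by (intro mult_left_mono) auto
    finally show ?thesis by simp
  qed
  have R2b: "cmod R2 \<le> Kq / \<bar>\<eta>\<bar>^3"
  proof -
    have "cmod R2 \<le> (Kq / \<bar>\<eta>\<bar>^3 * 4) * (3/4 - 1/2)"
      unfolding R2_def
    proof (rule seg_bound[OF int2])
      fix t assume t: "t \<in> {1/2..3/4::real}"
      show "cmod (Rf \<gamma> \<eta> b (al2 + of_real t * be2) * be2) \<le> Kq / \<bar>\<eta>\<bar>^3 * 4"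
        unfolding norm_mult using s2[OF t] nb2 B by (intro mult_mono) auto
    qed (use Kq0 in auto)
    then show ?thesis by simp
  qed
  have Gs: "cmod (Gf \<gamma> \<eta> b (0 + of_real t0 * be1)) \<le> 1 / \<bar>\<eta>\<bar>^3"
    using s1(2)[of t0] t0h by auto
  define l where "l = \<eta>^2 / 5"
  have l0: "l > 0" unfolding l_def using en by simp
  define c where "c = 2 * M3 * Kq / \<eta>^2"
  have c0: "c \<ge> 0" unfolding c_def using M30 Kq0 by simp
  have gi: "((\<lambda>t. c * exp (- l * (1 - t))) has_integral c * ((1 - exp (- l / 4)) / l)) {3/4..1}"
    by (rule has_integral_mult_right[OF exp_int[OF l0]])
  have "cmod R3 \<le> integral {3/4..1} (\<lambda>t. c * exp (- l * (1 - t)))"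
    unfolding R3_def
  proof (rule integral_norm_bound_integral[OF int3])
    show "(\<lambda>t. c * exp (- l * (1 - t))) integrable_on {3/4..1}" using gi by blast
    fix t :: real assume t: "t \<in> {3/4..1}"
    show "cmod (Rf \<gamma> \<eta> b (al3 + of_real t * be3) * be3) \<le> c * exp (- l * (1 - t))"
      using small_3[OF bb e40 r0 r6 er, of t \<gamma>] t unfolding c_def l_def M3_def Kq_def by auto
  qed
  also have "\<dots> = c * ((1 - exp (- l / 4)) / l)" using gi by (rule integral_unique)
  also have "\<dots> \<le> c * (1 / l)" using c0 l0 by (intro mult_left_mono divide_right_mono) auto
  also have "\<dots> = 10 * M3 * Kq / \<bar>\<eta>\<bar>^4"
  proof -
    have a4: "\<bar>\<eta>\<bar>^4 = \<eta>^2 * \<eta>^2" by (simp add: power_even_abs_numeral flip: power_add)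
    have "\<eta> \<noteq> 0" using en by simp
    then show ?thesis unfolding a4 c_def l_def by (simp add: field_simps)
  qed
  also have "\<dots> \<le> 10 * M3 * Kq / \<bar>\<eta>\<bar>^3"
  proof -
    have "\<bar>\<eta>\<bar>^3 \<le> \<bar>\<eta>\<bar>^4" using e1 by (intro power_increasing) auto
    then show ?thesis using M30 Kq0 en by (intro divide_left_mono mult_nonneg_nonneg) auto
  qed
  finally have R3b: "cmod R3 \<le> 10 * M3 * Kq / \<bar>\<eta>\<bar>^3" .
  have G1: "cmod (Gf \<gamma> \<eta> b 1 - 1 / (2 * of_real (\<eta>^2))) \<le> 1 / \<bar>\<eta>\<bar>^3"
    by (rule G1_est[OF bb]) (use e40 in simp)
  have "cmod (Gf \<gamma> \<eta> b 1 - Gf \<gamma> \<eta> b (0 + of_real t0 * be1) - (R1 + R2 + R3) - 1 / (2 * of_real (\<eta>^2)))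
      = cmod ((Gf \<gamma> \<eta> b 1 - 1 / (2 * of_real (\<eta>^2))) - Gf \<gamma> \<eta> b (0 + of_real t0 * be1) - R1 - R2 - R3)"
    by (simp add: algebra_simps)
  also have "\<dots> \<le> cmod (Gf \<gamma> \<eta> b 1 - 1 / (2 * of_real (\<eta>^2))) + cmod (Gf \<gamma> \<eta> b (0 + of_real t0 * be1))
      + cmod R1 + cmod R2 + cmod R3"
    by (intro order_trans[OF norm_triangle_ineq4] add_mono order_refl)
  also have "\<dots> \<le> 1 / \<bar>\<eta>\<bar>^3 + 1 / \<bar>\<eta>\<bar>^3 + Kq / \<bar>\<eta>\<bar>^3 + Kq / \<bar>\<eta>\<bar>^3 + 10 * M3 * Kq / \<bar>\<eta>\<bar>^3"
    using G1 Gs R1b R2b R3b by linarith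
  also have "\<dots> = (2 + 2 * Kq + 10 * M3 * Kq) / \<bar>\<eta>\<bar>^3" by (simp add: add_divide_distrib)
  finally show ?thesis unfolding Kq_def M3_def .
qed

theorem lemma3p6:
  fixes \<gamma> C0 :: real
  assumes "C0 > 0"
  shows "\<exists>C1>0. \<forall>C\<ge>C1. \<exists>K \<eta>0. \<forall>\<eta> lam a.
     \<eta>0 \<le> \<bar>\<eta>\<bar> \<and> 1 / C0 \<le> lam \<and> lam \<le> C0 \<and> a \<in> Lambda - Lambda_tilde \<eta> \<longrightarrow>
       path_part_integrand Omega_path (integrand36 \<gamma> a \<eta> lam)
         integrable_on path_part_domain Omega_path (Omega - Omega_tilde C \<eta>) \<and>
       cmod (integral (path_part_domain Omega_path (Omega - Omega_tilde C \<eta>))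
                (path_part_integrand Omega_path (integrand36 \<gamma> a \<eta> lam))
             - 1 / (2 * of_real (\<eta>^2)))
         \<le> K * \<bar>\<eta>\<bar> powr (-3)"
proof (rule exI[of _ 10], intro conjI allI impI)
  show "(10::real) > 0" by simp
  fix C :: real assume C10: "10 \<le> C"
  define K where "K = 2 + 2 * (5 * \<bar>3 - \<gamma>\<bar> + 3) + 10 * (1/2) powr (- \<bar>\<gamma>\<bar>) * (5 * \<bar>3 - \<gamma>\<bar> + 3)"
  define E where "E = 36 * C^2 + 20 * (\<bar>\<gamma>\<bar> + 1) + 40"
  show "\<exists>K \<eta>0. \<forall>\<eta> lam a.
     \<eta>0 \<le> \<bar>\<eta>\<bar> \<and> 1 / C0 \<le> lam \<and> lam \<le> C0 \<and> a \<in> Lambda - Lambda_tilde \<eta> \<longrightarrow>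
       path_part_integrand Omega_path (integrand36 \<gamma> a \<eta> lam)
         integrable_on path_part_domain Omega_path (Omega - Omega_tilde C \<eta>) \<and>
       cmod (integral (path_part_domain Omega_path (Omega - Omega_tilde C \<eta>))
                (path_part_integrand Omega_path (integrand36 \<gamma> a \<eta> lam))
             - 1 / (2 * of_real (\<eta>^2)))
         \<le> K * \<bar>\<eta>\<bar> powr (-3)"
  proof -
    have key: "path_part_integrand Omega_path (integrand36 \<gamma> a \<eta> lam)
         integrable_on path_part_domain Omega_path (Omega - Omega_tilde C \<eta>) \<and>
       cmod (integral (path_part_domain Omega_path (Omega - Omega_tilde C \<eta>))
                (path_part_integrand Omega_path (integrand36 \<gamma> a \<eta> lam))
             - 1 / (2 * of_real (\<eta>^2)))
         \<le> K * \<bar>\<eta>\<bar> powr (-3)"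
      if H: "E \<le> \<bar>\<eta>\<bar> \<and> 1 / C0 \<le> lam \<and> lam \<le> C0 \<and> a \<in> Lambda - Lambda_tilde \<eta>"
      for \<eta> lam :: real and a :: complex
    proof -
    define s where "s = \<bar>\<eta>\<bar>"
    have sE: "E \<le> s" using H s_def by simp
    have s40: "s \<ge> 40" using sE zero_le_power2[of C] abs_ge_zero[of \<gamma>] unfolding E_def by (smt (verit))
    have sg: "s \<ge> 20 * (\<bar>\<gamma>\<bar> + 1)" using sE zero_le_power2[of C] abs_ge_zero[of \<gamma>] unfolding E_def by (smt (verit))
    have sC: "s \<ge> 36 * C^2" using sE zero_le_power2[of C] abs_ge_zero[of \<gamma>] unfolding E_def by (smt (verit))
    have s0: "s > 0" using s40 by simp
    define q where "q = sqrt s"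
    have q0: "q > 0" unfolding q_def using s0 by simp
    have qq: "q^2 = s" unfolding q_def using s0 by simp
    have q1: "q \<ge> 1" unfolding q_def using s40 by simp
    have q6: "q \<ge> 6 * C"
    proof -
      have "(6 * C)^2 = 36 * C^2" by (simp add: power2_eq_square)
      then have "sqrt ((6 * C)^2) \<le> q" unfolding q_def using sC by (intro real_sqrt_le_mono) simp
      moreover have "sqrt ((6 * C)^2) = 6 * C" using C10 by (simp only: real_sqrt_abs)
      ultimately show ?thesis by simp
    qed
    have pw: "\<bar>\<eta>\<bar> powr (-1/2) = 1 / q"
      unfolding q_def s_def[symmetric] using s0 by (simp add: powr_minus_divide powr_half_sqrt[symmetric])
    define r where "r = C * \<bar>\<eta>\<bar> powr (-1/2)"
    have rq: "r = C / q" unfolding r_def pw by simp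
    have r0: "0 < r" unfolding rq using C10 q0 by simp
    have r6: "r \<le> 1/6" unfolding rq using q6 q0 C10 by (simp add: field_simps)
    have er: "\<bar>\<eta>\<bar> * r \<ge> 5/2"
    proof -
      have "\<bar>\<eta>\<bar> * r = C * q" unfolding rq s_def[symmetric] qq[symmetric] using q0 by (simp add: power2_eq_square)
      also have "\<dots> \<ge> 10 * 1" using C10 q1 by (intro mult_mono) auto
      finally show ?thesis by simp
    qed
    have rr: "r^2 * \<bar>\<eta>\<bar> \<ge> 100"
    proof -
      have "r^2 * \<bar>\<eta>\<bar> = C^2" unfolding rq s_def[symmetric] qq[symmetric] using q0 by (simp add: field_simps power2_eq_square)
      also have "\<dots> \<ge> 10^2" using C10 by (intro power_mono) auto
      finally show ?thesis by simp
    qed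
    have rs: "1 / \<bar>\<eta>\<bar> \<le> r"
    proof -
      have "1 / \<bar>\<eta>\<bar> = 1 / (q * q)" unfolding s_def[symmetric] qq[symmetric] by (simp add: power2_eq_square)
      also have "\<dots> \<le> 1 / q" using q1 q0 by (simp add: field_simps)
      also have "\<dots> \<le> C / q" using C10 q0 by (simp add: divide_right_mono)
      finally show ?thesis unfolding rq .
    qed
    have aL: "\<not> cmod a \<le> \<bar>\<eta>\<bar> powr (-1/2)" using H unfolding Lambda_tilde_def by auto
    then have aq: "cmod a > 1 / q" unfolding pw by simp
    then have a0: "a \<noteq> 0" using q0 by auto
    define b where "b = 1 / (2 * a^2)"
    have bb: "cmod b \<le> \<bar>\<eta>\<bar> / 2"
    proof -
      have "(1/q)^2 \<le> (cmod a)^2" using aq q0 by (intro power_mono) auto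
      then have "1 / s \<le> (cmod a)^2" unfolding qq[symmetric] by (simp add: power_divide)
      then have "1 / (cmod a)^2 \<le> s" using a0 s0 by (simp add: field_simps)
      moreover have "cmod b = 1 / (2 * (cmod a)^2)" unfolding b_def by (simp add: norm_divide norm_mult norm_power)
      ultimately show ?thesis unfolding s_def by (simp add: divide_right_mono)
    qed
    have e1: "\<bar>\<eta>\<bar> \<ge> 1" using s40 s_def by simp
    have e40: "\<bar>\<eta>\<bar> \<ge> 40" using s40 s_def by simp
    have eg: "\<bar>\<eta>\<bar> \<ge> 20 * (\<bar>\<gamma>\<bar> + 1)" using sg s_def by simp
    note HI = main_has_integral[OF a0 b_def bb e1 r0 r6 er r_def, of \<gamma> lam]
    note ES = main_est[OF bb e40 eg r0 r6 er rr rs]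
    show "path_part_integrand Omega_path (integrand36 \<gamma> a \<eta> lam)
         integrable_on path_part_domain Omega_path (Omega - Omega_tilde C \<eta>) \<and>
       cmod (integral (path_part_domain Omega_path (Omega - Omega_tilde C \<eta>))
                (path_part_integrand Omega_path (integrand36 \<gamma> a \<eta> lam))
             - 1 / (2 * of_real (\<eta>^2)))
         \<le> K * \<bar>\<eta>\<bar> powr (-3)"
    proof
      show "path_part_integrand Omega_path (integrand36 \<gamma> a \<eta> lam)
         integrable_on path_part_domain Omega_path (Omega - Omega_tilde C \<eta>)" using HI by blast
      have p3: "\<bar>\<eta>\<bar> powr (-3) = 1 / \<bar>\<eta>\<bar>^3" using s0 s_def by (simp add: powr_minus_divide powr_realpow)
      show "cmod (integral (path_part_domain Omega_path (Omega - Omega_tilde C \<eta>))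
                (path_part_integrand Omega_path (integrand36 \<gamma> a \<eta> lam))
             - 1 / (2 * of_real (\<eta>^2))) \<le> K * \<bar>\<eta>\<bar> powr (-3)"
        unfolding integral_unique[OF HI] p3 using ES unfolding K_def by simp
    qed
    qed
    then show ?thesis by blast
  qed
qed

end
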